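(* Let $\mathrm{char}(K)=0$ and $k\ge2$ an integer. Then $$\Big((1+x)\frac{d}{dx}\Big)\big(\mathrm{Log}_k(1+x)\big)=1.$$
   Context: Let $K$ be a field of characteristic $0$ and let $x\neq y$ be two symbols. A finite planar reduced rooted tree is a finite rooted tree in which the children of each vertex are linearly ordered and no vertex has exactly one child; its leaves are the vertices without children. $P(x,y)$ is the set of isomorphism classes of pairs $S=(T,\lambda)$, $T$ a finite planar reduced rooted tree, $\lambda:L(T)\to\{x,y\}$ a labeling of its leaves; $\deg_x(S)=\#\lambda^{-1}(x)$, $\deg S=\#L(T)$. $P'(x,y)=P(x,y)\cup\{1_P\}$ with $1_P$ the empty tree (degree 0). For $m\ge2$, $\bullet_m(S_1,\dots,S_m)$ is the tree with a new root whose ordered children are the roots of $S_1,\dots,S_m$, labelings inherited; on $P'(x,y)$ occurrences of $1_P$ are deleted, with $\bullet_1(S)=S$, $\bullet_0()=1_P$. $K\{\{x,y\}$: all $f=\sum_{S\in P'(x,y)}c_S(f)S$ such that for each $n$ only finitely many $S$ with $\deg_x(S)=n$ have $c_S(f)\ne0$; products $f_1\cdot\ldots\cdot f_m=\bullet_m(f_1,\dots,f_m)$ with $c_S(f_1\cdot\ldots\cdot f_m)=\sum_{\bullet_m(S_1,\dots,S_m)=S}c_{S_1}(f_1)\cdots c_{S_m}(f_m)$; $x$-adic topology from $\mathrm{ord}_x(f)=\min\{\deg_x S:c_S(f)\ne0\}$. $K\{\{x\}\}$: series supported on $1_P$ and trees with all leaves labeled $x$; we write $1=1_P$. For $g,h\in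 K\{\{x,y\}$ with $\mathrm{ord}_x(g)\ge1$, $\varphi_{(g,h)}$ denotes the unique $x$-adically continuous $K$-linear map preserving $1_P$ and all $\bullet_m$ with $x\mapsto g$, $y\mapsto h$; for $f\in K\{\{x\}\}$, $f(g(x))$ denotes $\varphi_{(g,h)}(f)$. The universal derivation $d:K\{\{x\}\}\to K\{\{x,y\}$ is the continuous $K$-linear map with $d(1_P)=0$ and, for a tree $S=(T,\lambda)$ with all leaves $l_1,\dots,l_m$ labeled $x$, $d(S)=\sum_{i=1}^m(T,\lambda^{(i)})$ with $\lambda^{(i)}$ labeling $l_i$ by $y$ and the other leaves by $x$. For $h\in K\{\{x\}\}$, $h\frac{d}{dx}:=\varphi_{(x,h)}\circ d$; in particular $(1+x)\frac{d}{dx}=\varphi_{(x,1+x)}\circ d$ and $\frac{d}{dx}=\varphi_{(x,1)}\circ d$. For an integer $k\ge2$, the $k$-ary planar exponential series $\mathrm{Exp}_k(x)=\sum_{n\ge0}f_n$ ($f_n$ supported on trees with $n$ leaves) is the unique series in $K\{\{x\}\}$ with $f_0=1$, $f_1=x$ and $k^nf_n=\sum_{i_1+\dots+i_k=n}f_{i_1}\cdot\ldots\cdot f_{i_k}$ ($k$-ary products) for all $n$. The $k$-ary planar logarithm $\mathrm{Log}_k(1+x)$ is the series $h\in K\{\{x\}\}$ with zero constant term (coefficient of $1_P$) which is inverse to $\mathrm{Exp}_k(x)-1$ under substitution: $h(\mathrm{Exp}_k(x)-1)=x$, i.e. $\mathrm{Log}_k(\mathrm{Exp}_k(x))=x$.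 *)

theory Defs
  imports Main
begin

datatype lbl = X | Y

datatype ptree = Lf lbl | Nd "ptree list"

fun wfT :: "ptree \<Rightarrow> bool" where
  "wfT (Lf _) = True"
| "wfT (Nd ts) = (length ts \<ge> 2 \<and> (\<forall>t\<in>set ts. wfT t))"

fun degxT :: "ptree \<Rightarrow> nat" where
  "degxT (Lf l) = (if l = X then 1 else 0)"
| "degxT (Nd ts) = sum_list (map degxT ts)"

fun degyT :: "ptree \<Rightarrow> nat" where
  "degyT (Lf l) = (if l = Y then 1 else 0)"
| "degyT (Nd ts) = sum_list (map degyT ts)"

fun degT :: "ptree \<Rightarrow> nat" where
  "degT (Lf _) = 1"
| "degT (Nd ts) = sum_list (map degT ts)"

fun allX :: "ptree \<Rightarrow> ptree" where
  "allX (Lf _) = Lf X"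
| "allX (Nd ts) = Nd (map allX ts)"

text \<open>Elements of P'(x,y): None is the empty tree 1_P.\<close>
definition degx :: "ptree option \<Rightarrow> nat" where
  "degx S = (case S of None \<Rightarrow> 0 | Some T \<Rightarrow> degxT T)"

definition deg :: "ptree option \<Rightarrow> nat" where
  "deg S = (case S of None \<Rightarrow> 0 | Some T \<Rightarrow> degT T)"

text \<open>The grafting operation bullet_m on P'(x,y) (occurrences of 1_P deleted).\<close>
definition bul :: "ptree option list \<Rightarrow> ptree option" where
  "bul ss = (case map the (filter (\<lambda>s. s \<noteq> None) ss) of
               [] \<Rightarrow> None
             | [t] \<Rightarrow> Some t
             | ts \<Rightarrow> Some (Nd ts))"

type_synonym 'a pser = "ptree option \<Rightarrow> 'a"

definition serxy :: "('a::zero) pser set" where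
  "serxy = {f. (\<forall>T. f (Some T) \<noteq> 0 \<longrightarrow> wfT T) \<and>
               (\<forall>n. finite {S. f S \<noteq> 0 \<and> degx S = n})}"

definition serx :: "('a::zero) pser set" where
  "serx = {f. f \<in> serxy \<and> (\<forall>T. f (Some T) \<noteq> 0 \<longrightarrow> degyT T = 0)}"

definition oneser :: "('a::{zero,one}) pser" where
  "oneser = (\<lambda>S. if S = None then 1 else 0)"

definition xser :: "('a::{zero,one}) pser" where
  "xser = (\<lambda>S. if S = Some (Lf X) then 1 else 0)"

definition prods :: "('a::comm_ring_1) pser list \<Rightarrow> 'a pser" where
  "prods fs S = (\<Sum>ss \<in> {ss. length ss = length fs \<and> bul ss = S}.
                   \<Prod>i<length fs. (fs ! i) (ss ! i))"

fun phiT :: "('a::comm_ring_1) pser \<Rightarrow> 'a pser \<Rightarrow> ptree \<Rightarrow> 'a pser" where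
  "phiT g h (Lf l) = (if l = X then g else h)"
| "phiT g h (Nd ts) = prods (map (phiT g h) ts)"

definition phiO :: "('a::comm_ring_1) pser \<Rightarrow> 'a pser \<Rightarrow> ptree option \<Rightarrow> 'a pser" where
  "phiO g h S = (case S of None \<Rightarrow> oneser | Some T \<Rightarrow> phiT g h T)"

text \<open>phi_(g,h)(f) = sum_S c_S(f) phi_(g,h)(S), the x-adically continuous extension
  (for ord_x g \<ge> 1 only trees S with deg_x S \<le> deg_x T contribute to the coefficient of T).\<close>
definition phi :: "('a::comm_ring_1) pser \<Rightarrow> 'a pser \<Rightarrow> 'a pser \<Rightarrow> 'a pser" where
  "phi g h f T = (\<Sum>S \<in> {S. f S \<noteq> 0 \<and> degx S \<le> degx T}. f S * phiO g h S T)"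

text \<open>Substitution f(g(x)) for f in K{{x}} (the value on y is irrelevant).\<close>
definition subst :: "('a::comm_ring_1) pser \<Rightarrow> 'a pser \<Rightarrow> 'a pser" where
  "subst f g = phi g (\<lambda>_. 0) f"

definition dser :: "('a::comm_ring_1) pser \<Rightarrow> 'a pser" where
  "dser f S = (case S of None \<Rightarrow> 0
                | Some T \<Rightarrow> (if degyT T = 1 then f (Some (allX T)) else 0))"

definition hder :: "('a::comm_ring_1) pser \<Rightarrow> 'a pser \<Rightarrow> 'a pser" where
  "hder h f = phi xser h (dser f)"

definition hpart :: "nat \<Rightarrow> ('a::zero) pser \<Rightarrow> 'a pser" where
  "hpart n E = (\<lambda>S. if deg S = n then E S else 0)"

definition Expk :: "nat \<Rightarrow> ('a::field_char_0) pser" where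
  "Expk k = (THE E. E \<in> serx \<and> hpart 0 E = oneser \<and> hpart 1 E = xser \<and>
     (\<forall>n. (\<lambda>S. of_nat (k ^ n) * hpart n E S) =
          (\<lambda>S. \<Sum>is \<in> {is. length is = k \<and> sum_list is = n}.
                  prods (map (\<lambda>i. hpart i E) is) S)))"

definition Logk :: "nat \<Rightarrow> ('a::field_char_0) pser" where
  "Logk k = (THE h. h \<in> serx \<and> h None = 0 \<and>
               subst h (\<lambda>S. Expk k S - oneser S) = xser)"

end

theory Submission
  imports Defs
begin

lemma degT_split: "degT t = degxT t + degyT t"
proof (induction t)
  case (Lf l) then show ?case by (cases l) auto
next
  case (Nd ts)
  then have "map degT ts = map (\<lambda>t. degxT t + degyT t) ts" by simp
  then show ?case by (simp only: degT.simps degxT.simps degyT.simps sum_list_addf)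
qed

lemma sum_list_map_cong: "(\<And>x. x \<in> set xs \<Longrightarrow> f x = g x) \<Longrightarrow> sum_list (map f xs) = sum_list (map g xs)"
  by (induction xs) auto

lemma allX_props: "degT (allX t) = degT t \<and> degyT (allX t) = 0 \<and> degxT (allX t) = degT t \<and> wfT (allX t) = wfT t"
proof (induction t)
  case (Lf l) then show ?case by auto
next
  case (Nd ts)
  have 1: "sum_list (map (\<lambda>t. degT (allX t)) ts) = sum_list (map degT ts)"
    by (rule sum_list_map_cong) (use Nd in auto)
  have 2: "sum_list (map (\<lambda>t. degyT (allX t)) ts) = 0"
    using sum_list_map_cong[of ts "\<lambda>t. degyT (allX t)" "\<lambda>_. 0"] Nd by auto
  have 3: "sum_list (map (\<lambda>t. degxT (allX t)) ts) = sum_list (map degT ts)"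
    by (rule sum_list_map_cong) (use Nd in auto)
  have 4: "(\<forall>t\<in>set ts. wfT (allX t)) = (\<forall>t\<in>set ts. wfT t)" using Nd by auto
  show ?case using 1 2 3 4 by (simp add: o_def)
qed

lemma allX_Yfree: "degyT t = 0 \<Longrightarrow> allX t = t"
proof (induction t)
  case (Lf l) then show ?case by (cases l) auto
next
  case (Nd ts)
  then have "\<forall>t\<in>set ts. degyT t = 0" by simp
  with Nd have "map allX ts = ts" by (simp add: map_idI)
  then show ?case by simp
qed

lemma wf_degT: "wfT t \<Longrightarrow> 1 \<le> degT t"
proof (induction t)
  case (Lf l) then show ?case by auto
next
  case (Nd ts)
  then obtain a r where ar: "ts = a # r" by (cases ts) auto
  then have "1 \<le> degT a" using Nd by auto
  then show ?case using ar by simp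
qed

lemma sum_list_ge_length: "(\<And>x. x \<in> set xs \<Longrightarrow> 1 \<le> f x) \<Longrightarrow> length xs \<le> sum_list (map f xs)"
proof (induction xs)
  case Nil then show ?case by simp
next
  case (Cons a xs)
  then have "1 \<le> f a" "length xs \<le> sum_list (map f xs)" by auto
  then show ?case by simp
qed

lemma member_le_sum_list: "x \<in> set xs \<Longrightarrow> (f x::nat) \<le> sum_list (map f xs)"
  by (induction xs) auto

lemma wf_child_less: "wfT (Nd ts) \<Longrightarrow> t \<in> set ts \<Longrightarrow> degT t < degT (Nd ts)"
proof -
  assume w: "wfT (Nd ts)" and t: "t \<in> set ts"
  then have l2: "2 \<le> length ts" by simp
  have "degT (Nd ts) = degT t + sum_list (map degT (remove1 t ts))"
    using t by (simp add: sum_list_map_remove1)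
  moreover have "length (remove1 t ts) = length ts - 1" using t by (simp add: length_remove1)
  then have "remove1 t ts \<noteq> []" using l2 by auto
  then obtain u where u: "u \<in> set (remove1 t ts)" by (cases "remove1 t ts") auto
  then have "u \<in> set ts" using set_remove1_subset by fastforce
  then have "1 \<le> degT u" using w wf_degT by auto
  then have "1 \<le> sum_list (map degT (remove1 t ts))" using member_le_sum_list[OF u, of degT] by linarith
  ultimately show ?thesis by linarith
qed

lemma finite_wf: "finite {t. wfT t \<and> degT t = n}"
proof (induction n rule: less_induct)
  case (less n)
  let ?A = "\<Union>j<n. {t. wfT t \<and> degT t = j}"
  have fA: "finite ?A" using less by auto
  have "{t. wfT t \<and> degT t = n} \<subseteq> {Lf X, Lf Y} \<union> Nd ` {ts. set ts \<subseteq> ?A \<and> length ts \<le> n}"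
  proof
    fix t assume "t \<in> {t. wfT t \<and> degT t = n}"
    then have w: "wfT t" and d: "degT t = n" by auto
    show "t \<in> {Lf X, Lf Y} \<union> Nd ` {ts. set ts \<subseteq> ?A \<and> length ts \<le> n}"
    proof (cases t)
      case (Lf l) then show ?thesis by (cases l) auto
    next
      case (Nd ts)
      have "set ts \<subseteq> ?A" using wf_child_less w d Nd by auto
      moreover have "length ts \<le> n" using sum_list_ge_length[of ts degT] w d Nd wf_degT by auto
      ultimately show ?thesis using Nd by auto
    qed
  qed
  moreover have "finite ({Lf X, Lf Y} \<union> Nd ` {ts. set ts \<subseteq> ?A \<and> length ts \<le> n})"
    using finite_lists_length_le[OF fA] by auto
  ultimately show ?case by (rule finite_subset)
qed

definition degyO :: "ptree option \<Rightarrow> nat" where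
  "degyO S = (case S of None \<Rightarrow> 0 | Some T \<Rightarrow> degyT T)"

definition okx :: "ptree option \<Rightarrow> bool" where
  "okx S = (case S of None \<Rightarrow> True | Some T \<Rightarrow> wfT T \<and> degyT T = 0)"

definition fl :: "ptree option list \<Rightarrow> ptree list" where
  "fl ss = map the (filter (\<lambda>s. s \<noteq> None) ss)"

lemma fl_simps[simp]: "fl [] = []" "fl (None # ss) = fl ss" "fl (Some t # ss) = t # fl ss"
  "fl (xs @ ys) = fl xs @ fl ys" "fl (a # ss) = (case a of None \<Rightarrow> fl ss | Some t \<Rightarrow> t # fl ss)"
  by (auto simp: fl_def split: option.splits)

lemma bul_fl: "bul ss = (case fl ss of [] \<Rightarrow> None | [t] \<Rightarrow> Some t | ts \<Rightarrow> Some (Nd ts))"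
  by (simp add: bul_def fl_def)

lemma degx_sum_fl: "sum_list (map degx ss) = sum_list (map degxT (fl ss))"
  by (induction ss) (auto simp: degx_def split: option.splits)
lemma deg_sum_fl: "sum_list (map deg ss) = sum_list (map degT (fl ss))"
  by (induction ss) (auto simp: deg_def split: option.splits)
lemma degy_sum_fl: "sum_list (map degyO ss) = sum_list (map degyT (fl ss))"
  by (induction ss) (auto simp: degyO_def split: option.splits)

lemma bul_cases:
  obtains "fl ss = []" "bul ss = None"
  | t where "fl ss = [t]" "bul ss = Some t"
  | ts where "fl ss = ts" "2 \<le> length ts" "bul ss = Some (Nd ts)"
proof (cases "fl ss")
  case Nil then show ?thesis using that by (simp add: bul_fl)
next
  case (Cons t r)
  then show ?thesis using that by (cases r) (auto simp: bul_fl)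
qed

lemma degx_bul: "degx (bul ss) = sum_list (map degx ss)"
  by (cases ss rule: bul_cases) (auto simp: degx_def degx_sum_fl)
lemma deg_bul: "deg (bul ss) = sum_list (map deg ss)"
  by (cases ss rule: bul_cases) (auto simp: deg_def deg_sum_fl)
lemma degy_bul: "degyO (bul ss) = sum_list (map degyO ss)"
  by (cases ss rule: bul_cases) (auto simp: degyO_def degy_sum_fl)

lemma bul_Some: "bul ss = Some T \<Longrightarrow> fl ss = [T] \<or> (\<exists>ts. T = Nd ts \<and> 2 \<le> length ts \<and> fl ss = ts)"
  by (cases ss rule: bul_cases) auto

lemma bul_None: "bul ss = None \<longleftrightarrow> fl ss = []"
  by (cases ss rule: bul_cases) auto

lemma fl_single: "fl ss = [T] \<Longrightarrow> bul ss = Some T"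
  by (simp add: bul_fl)

lemma fl_multi: "fl ss = ts \<Longrightarrow> 2 \<le> length ts \<Longrightarrow> bul ss = Some (Nd ts)"
  by (cases ss rule: bul_cases) auto

lemma fl_Nil_iff: "fl ss = [] \<longleftrightarrow> (\<forall>s\<in>set ss. s = None)"
  by (induction ss) (auto split: option.splits)

lemma set_fl: "Some t \<in> set ss \<longleftrightarrow> t \<in> set (fl ss)"
  by (induction ss) (auto split: option.splits)

lemma length_fl: "length (fl ss) \<le> length ss"
  by (simp add: fl_def)

definition fib :: "nat \<Rightarrow> ptree option \<Rightarrow> ptree option list set" where
  "fib m S = {ss. length ss = m \<and> bul ss = S}"

lemma fin_fib: "finite (fib m S)"
proof -
  define A where "A = insert None (Some ` (case S of None \<Rightarrow> {} | Some T \<Rightarrow>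
     insert T (case T of Nd ts \<Rightarrow> set ts | _ \<Rightarrow> {})))"
  have fA: "finite A" unfolding A_def by (auto split: option.splits ptree.splits)
  have "fib m S \<subseteq> {ss. set ss \<subseteq> A \<and> length ss = m}"
  proof
    fix ss assume ss: "ss \<in> fib m S"
    have "set ss \<subseteq> A"
    proof
      fix s assume s: "s \<in> set ss"
      show "s \<in> A"
      proof (cases s)
        case None then show ?thesis by (simp add: A_def)
      next
        case (Some t)
        then have t: "t \<in> set (fl ss)" using s set_fl by auto
        have "bul ss = S" using ss by (simp add: fib_def)
        then show ?thesis
        proof (cases ss rule: bul_cases)
          case 1 then show ?thesis using t by simp
        next
          case (2 u) then show ?thesis using t Some \<open>bul ss = S\<close> by (auto simp: A_def)
        next
          case (3 ts) then show ?thesis using t Some \<open>bul ss = S\<close> by (auto simp: A_def)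
        qed
      qed
    qed
    then show "ss \<in> {ss. set ss \<subseteq> A \<and> length ss = m}" using ss by (simp add: fib_def)
  qed
  then show ?thesis using finite_lists_length_eq[OF fA] finite_subset by blast
qed


section \<open>Products\<close>

definition tupz :: "('a::comm_ring_1) pser list \<Rightarrow> ptree option list \<Rightarrow> 'a" where
  "tupz fs ss = prod_list (map2 (\<lambda>f s. f s) fs ss)"

lemma tup_conv: "length ss = length fs \<Longrightarrow>
   (\<Prod>i<length fs. (fs!i) (ss!i)) = tupz fs ss"
proof (induction fs arbitrary: ss)
  case Nil then show ?case by (simp add: tupz_def)
next
  case (Cons f fs)
  then obtain s ss' where ss: "ss = s # ss'" "length ss' = length fs" by (cases ss) auto
  have "(\<Prod>i<length (f # fs). ((f # fs)!i) (ss!i)) = f s * (\<Prod>i<length fs. (fs!i) (ss'!i))"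
    unfolding ss(1) length_Cons prod.lessThan_Suc_shift by simp
  also have "\<dots> = tupz (f # fs) ss" using Cons.IH[OF ss(2)] ss by (simp add: tupz_def)
  finally show ?case .
qed

lemma prods_z: "prods fs S = (\<Sum>ss\<in>fib (length fs) S. tupz fs ss)"
  unfolding prods_def fib_def by (rule sum.cong) (auto simp: tup_conv)

lemma prods_i: "prods fs S = (\<Sum>ss\<in>fib (length fs) S. \<Prod>i<length fs. (fs!i) (ss!i))"
  unfolding prods_def fib_def by simp

lemma fib_0: "fib 0 S = (if S = None then {[]} else {})"
  by (auto simp: fib_def bul_fl)

lemma prods_Nil: "prods [] = oneser"
  by (rule ext) (simp add: prods_i fib_0 oneser_def)

lemma bul_single: "bul [s] = s"
  by (cases s) (auto simp: bul_fl)

lemma fib_1: "fib (Suc 0) S = {[S]}"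
proof -
  have "ss \<in> fib 1 S \<longleftrightarrow> ss = [S]" for ss
  proof
    assume "ss \<in> fib 1 S"
    then obtain s where "ss = [s]" "bul ss = S" unfolding fib_def by (auto simp: length_Suc_conv)
    then show "ss = [S]" by (simp add: bul_single)
  qed (simp add: fib_def bul_single)
  then show ?thesis by auto
qed

lemma prods_single: "prods [f] = f"
  by (rule ext) (simp add: prods_i fib_1)

lemma bul_eqI: "fl ss = fl ss' \<Longrightarrow> bul ss = bul ss'"
  by (simp add: bul_fl)

lemma prods_oneser: "prods (xs @ oneser # ys) = prods (xs @ ys)"
proof (rule ext)
  fix S
  let ?p = "length xs" and ?q = "length ys"
  let ?fs = "xs @ oneser # ys" and ?gs = "xs @ ys"
  define Z where "Z = {ss\<in>fib (length ?fs) S. ss ! ?p = None}"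
  have fz: "finite (fib (length ?fs) S)" by (rule fin_fib)
  have "prods ?fs S = (\<Sum>ss\<in>fib (length ?fs) S. \<Prod>i<length ?fs. (?fs!i) (ss!i))" by (rule prods_i)
  also have "\<dots> = (\<Sum>ss\<in>Z. \<Prod>i<length ?fs. (?fs!i) (ss!i))"
  proof (rule sum.mono_neutral_right[OF fz])
    show "Z \<subseteq> fib (length ?fs) S" by (auto simp: Z_def)
    show "\<forall>ss\<in>fib (length ?fs) S - Z. (\<Prod>i<length ?fs. (?fs!i) (ss!i)) = 0"
    proof
      fix ss assume "ss \<in> fib (length ?fs) S - Z"
      then have "ss ! ?p \<noteq> None" by (auto simp: Z_def)
      then have "(?fs ! ?p) (ss ! ?p) = 0" by (simp add: oneser_def)
      then show "(\<Prod>i<length ?fs. (?fs!i) (ss!i)) = 0"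
        by (intro prod_zero finite_lessThan bexI[of _ ?p]) auto
    qed
  qed
  also have "\<dots> = (\<Sum>ss\<in>Z. tupz ?fs ss)"
    by (rule sum.cong[OF refl], rule tup_conv) (auto simp: Z_def fib_def)
  also have "\<dots> = (\<Sum>ss\<in>fib (length ?gs) S. tupz ?gs ss)"
  proof (rule sum.reindex_bij_witness[where i = "\<lambda>ss. take ?p ss @ None # drop ?p ss"
        and j = "\<lambda>ss. take ?p ss @ drop (Suc ?p) ss"])
    fix a assume a: "a \<in> Z"
    then have la: "length a = ?p + 1 + ?q" and na: "a ! ?p = None" and ba: "bul a = S"
      by (auto simp: Z_def fib_def)
    have ad: "a = take ?p a @ a ! ?p # drop (Suc ?p) a" using la by (simp add: id_take_nth_drop)
    have ad2: "a = take ?p a @ None # drop (Suc ?p) a" using ad[unfolded na] .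
    have "take ?p (take ?p a @ drop (Suc ?p) a) @ None # drop ?p (take ?p a @ drop (Suc ?p) a)
       = take ?p a @ None # drop (Suc ?p) a" using la by simp
    also have "\<dots> = a" by (rule ad2[symmetric])
    finally show "take ?p (take ?p a @ drop (Suc ?p) a) @ None # drop ?p (take ?p a @ drop (Suc ?p) a) = a" .
    have "fl (take ?p a @ drop (Suc ?p) a) = fl a" using arg_cong[OF ad2, of fl] by simp
    then show "take ?p a @ drop (Suc ?p) a \<in> fib (length ?gs) S"
      unfolding fib_def using la ba bul_eqI[OF \<open>fl (take ?p a @ drop (Suc ?p) a) = fl a\<close>] by simp
    show "tupz ?gs (take ?p a @ drop (Suc ?p) a) = tupz ?fs a"
    proof -
      have "tupz ?fs a = tupz ?fs (take ?p a @ None # drop (Suc ?p) a)" using arg_cong[OF ad2, of "tupz ?fs"] .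
      also have "\<dots> = tupz xs (take ?p a) * tupz ys (drop (Suc ?p) a)"
        using la by (simp add: tupz_def zip_append oneser_def)
      also have "\<dots> = tupz ?gs (take ?p a @ drop (Suc ?p) a)"
        using la by (simp add: tupz_def zip_append)
      finally show ?thesis by simp
    qed
  next
    fix b assume b: "b \<in> fib (length ?gs) S"
    then have lb: "length b = ?p + ?q" and bb: "bul b = S" by (auto simp: fib_def)
    show "take ?p (take ?p b @ None # drop ?p b) @ drop (Suc ?p) (take ?p b @ None # drop ?p b) = b"
      using lb by simp
    have "fl (take ?p b @ None # drop ?p b) = fl (take ?p b @ drop ?p b)"
      by (simp only: fl_simps(2) fl_simps(4))
    then have flb: "fl (take ?p b @ None # drop ?p b) = fl b" by simp
    show "take ?p b @ None # drop ?p b \<in> Z"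
      unfolding Z_def fib_def using lb bb bul_eqI[OF flb] by (simp add: nth_append)
  qed
  also have "\<dots> = prods ?gs S" by (rule prods_z[symmetric])
  finally show "prods ?fs S = prods ?gs S" .
qed

lemma prods_filter:
  assumes "\<And>s. \<not> P s \<Longrightarrow> F s = oneser"
  shows "prods (xs @ map F ss) = prods (xs @ map F (filter P ss))"
proof (induction ss arbitrary: xs)
  case Nil then show ?case by simp
next
  case (Cons s ss)
  show ?case
  proof (cases "P s")
    case True
    then show ?thesis using Cons.IH[of "xs @ [F s]"] by simp
  next
    case False
    then have "prods (xs @ map F (s # ss)) = prods (xs @ map F ss)"
      using assms prods_oneser by simp
    then show ?thesis using Cons.IH[of xs] False by simp
  qed
qed

lemma tup_upd:
  assumes "j < length fs"
  shows "(\<Prod>i<length fs. ((fs[j := G]) ! i) (ss ! i)) =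
         G (ss ! j) * (\<Prod>i\<in>{..<length fs} - {j}. (fs ! i) (ss ! i))"
proof -
  have "(\<Prod>i<length fs. ((fs[j := G]) ! i) (ss ! i)) =
        ((fs[j := G]) ! j) (ss ! j) * (\<Prod>i\<in>{..<length fs} - {j}. ((fs[j := G]) ! i) (ss ! i))"
    using assms by (intro prod.remove) auto
  also have "(\<Prod>i\<in>{..<length fs} - {j}. ((fs[j := G]) ! i) (ss ! i)) =
             (\<Prod>i\<in>{..<length fs} - {j}. (fs ! i) (ss ! i))"
    by (rule prod.cong) auto
  finally show ?thesis using assms by simp
qed

lemma prods_slot_sum:
  assumes "j < length fs" "finite I"
  shows "prods (fs[j := (\<lambda>S. \<Sum>i\<in>I. F i S)]) S = (\<Sum>i\<in>I. prods (fs[j := F i]) S)"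
proof -
  let ?R = "\<lambda>ss. (\<Prod>l\<in>{..<length fs} - {j}. (fs ! l) (ss ! l))"
  have "prods (fs[j := (\<lambda>S. \<Sum>i\<in>I. F i S)]) S = (\<Sum>ss\<in>fib (length fs) S. (\<Sum>i\<in>I. F i (ss!j)) * ?R ss)"
    unfolding prods_i using assms by (simp add: tup_upd)
  also have "\<dots> = (\<Sum>ss\<in>fib (length fs) S. \<Sum>i\<in>I. F i (ss!j) * ?R ss)"
    by (simp add: sum_distrib_right)
  also have "\<dots> = (\<Sum>i\<in>I. \<Sum>ss\<in>fib (length fs) S. F i (ss!j) * ?R ss)"
    by (rule sum.swap)
  also have "\<dots> = (\<Sum>i\<in>I. prods (fs[j := F i]) S)"
    unfolding prods_i using assms by (simp add: tup_upd)
  finally show ?thesis .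
qed

lemma prods_slot_diff:
  assumes "j < length fs"
  shows "prods (fs[j := (\<lambda>S. F S - G S)]) S = prods (fs[j := F]) S - prods (fs[j := G]) S"
proof -
  let ?R = "\<lambda>ss. (\<Prod>l\<in>{..<length fs} - {j}. (fs ! l) (ss ! l))"
  have "prods (fs[j := (\<lambda>S. F S - G S)]) S = (\<Sum>ss\<in>fib (length fs) S. (F (ss!j) - G (ss!j)) * ?R ss)"
    unfolding prods_i using assms by (simp add: tup_upd)
  also have "\<dots> = (\<Sum>ss\<in>fib (length fs) S. F (ss!j) * ?R ss) - (\<Sum>ss\<in>fib (length fs) S. G (ss!j) * ?R ss)"
    by (simp add: left_diff_distrib sum_subtractf)
  also have "\<dots> = prods (fs[j := F]) S - prods (fs[j := G]) S"
    unfolding prods_i using assms by (simp add: tup_upd)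
  finally show ?thesis .
qed

lemma prods_supp:
  assumes "prods fs S \<noteq> 0"
  shows "\<exists>ss\<in>fib (length fs) S. \<forall>i<length fs. (fs!i) (ss!i) \<noteq> 0"
proof -
  from assms obtain ss where ss: "ss \<in> fib (length fs) S" "(\<Prod>i<length fs. (fs!i) (ss!i)) \<noteq> 0"
    unfolding prods_i by (meson sum.not_neutral_contains_not_neutral)
  have "\<forall>i<length fs. (fs!i) (ss!i) \<noteq> 0"
  proof (intro allI impI)
    fix i assume "i < length fs"
    show "(fs!i) (ss!i) \<noteq> 0"
    proof
      assume "(fs!i) (ss!i) = 0"
      then have "(\<Prod>i<length fs. (fs!i) (ss!i)) = 0" using \<open>i < length fs\<close> by (intro prod_zero) auto
      with ss(2) show False by simp
    qed
  qed
  then show ?thesis using ss(1) by blast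
qed

definition fin :: "('a::zero) pser \<Rightarrow> bool" where
  "fin f = (\<forall>n. finite {S. f S \<noteq> 0 \<and> degx S = n})"

lemma fin_le: "fin f \<Longrightarrow> finite {S. f S \<noteq> 0 \<and> degx S \<le> n}"
proof -
  assume "fin f"
  have "{S. f S \<noteq> 0 \<and> degx S \<le> n} = (\<Union>j\<le>n. {S. f S \<noteq> 0 \<and> degx S = j})" by auto
  then show ?thesis using \<open>fin f\<close> by (simp add: fin_def)
qed

lemma fin_leI: "(\<And>n. finite {S. f S \<noteq> 0 \<and> degx S \<le> n}) \<Longrightarrow> fin f"
  unfolding fin_def by (rule allI, rule finite_subset[rotated], assumption) auto

lemma nth_le_sum_list: "i < length ss \<Longrightarrow> (f (ss ! i)::nat) \<le> sum_list (map f ss)"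
  by (rule member_le_sum_list) simp

lemma prods_fin:
  assumes "\<forall>f\<in>set fs. fin f"
  shows "fin (prods fs)"
proof (rule fin_leI)
  fix n
  let ?B = "\<Union>f\<in>set fs. {S. f S \<noteq> 0 \<and> degx S \<le> n}"
  have fB: "finite ?B" using assms fin_le by auto
  have "{S. prods fs S \<noteq> 0 \<and> degx S \<le> n} \<subseteq> bul ` {ss. set ss \<subseteq> ?B \<and> length ss = length fs}"
  proof
    fix S assume S: "S \<in> {S. prods fs S \<noteq> 0 \<and> degx S \<le> n}"
    then obtain ss where ss: "ss \<in> fib (length fs) S" "\<forall>i<length fs. (fs!i) (ss!i) \<noteq> 0"
      using prods_supp by blast
    have "set ss \<subseteq> ?B"
    proof
      fix s assume "s \<in> set ss"
      then obtain i where i: "i < length ss" "s = ss ! i" by (metis in_set_conv_nth)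
      then have "degx s \<le> degx S" using ss(1) degx_bul[of ss] nth_le_sum_list[of i ss degx]
        by (auto simp: fib_def)
      then show "s \<in> ?B" using S ss i by (auto simp: fib_def)
    qed
    then show "S \<in> bul ` {ss. set ss \<subseteq> ?B \<and> length ss = length fs}" using ss(1) by (auto simp: fib_def)
  qed
  then show "finite {S. prods fs S \<noteq> 0 \<and> degx S \<le> n}"
    using finite_lists_length_eq[OF fB] finite_subset by blast
qed

lemma okx_bul: "(\<forall>s\<in>set ss. okx s) \<Longrightarrow> okx (bul ss)"
proof (cases ss rule: bul_cases)
  case 1 then show ?thesis by (simp add: okx_def)
next
  case (2 t)
  assume "\<forall>s\<in>set ss. okx s"
  moreover have "Some t \<in> set ss" using 2 set_fl by simp
  ultimately show ?thesis using 2 by (auto simp: okx_def)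
next
  case (3 ts)
  assume a: "\<forall>s\<in>set ss. okx s"
  have "\<forall>t\<in>set ts. wfT t \<and> degyT t = 0" using a 3 set_fl by (force simp: okx_def)
  then have "sum_list (map degyT ts) = 0" by (simp add: sum_list_eq_0_iff)
  then show ?thesis using 3 \<open>\<forall>t\<in>set ts. wfT t \<and> degyT t = 0\<close> by (simp add: okx_def)
qed

definition suppx :: "('a::zero) pser \<Rightarrow> bool" where
  "suppx f = (\<forall>S. f S \<noteq> 0 \<longrightarrow> okx S)"

lemma prods_suppx: "\<forall>f\<in>set fs. suppx f \<Longrightarrow> suppx (prods fs)"
  unfolding suppx_def
proof (intro allI impI)
  fix S assume a: "\<forall>f\<in>set fs. \<forall>S. f S \<noteq> 0 \<longrightarrow> okx S" and "prods fs S \<noteq> 0"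
  then obtain ss where ss: "ss \<in> fib (length fs) S" "\<forall>i<length fs. (fs!i) (ss!i) \<noteq> 0"
    using prods_supp by blast
  have "\<forall>s\<in>set ss. okx s"
  proof
    fix s assume "s \<in> set ss"
    then obtain i where i: "i < length ss" "s = ss!i" by (metis in_set_conv_nth)
    then have "fs!i \<in> set fs" "(fs!i) s \<noteq> 0" using ss by (auto simp: fib_def)
    then show "okx s" using a by blast
  qed
  then show "okx S" using okx_bul ss(1) by (auto simp: fib_def)
qed


section \<open>Substitution\<close>

definition ord1 :: "('a::zero) pser \<Rightarrow> bool" where
  "ord1 a = (fin a \<and> (\<forall>S. a S \<noteq> 0 \<longrightarrow> 1 \<le> degx S))"

lemma sum_list_mono2:
  "length xs = length ys \<Longrightarrow> (\<And>i. i < length xs \<Longrightarrow> (f (xs!i)::nat) \<le> g (ys!i)) \<Longrightarrow>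
   sum_list (map f xs) \<le> sum_list (map g ys)"
proof (induction xs arbitrary: ys)
  case Nil then show ?case by simp
next
  case (Cons x xs)
  then obtain y ys' where ys: "ys = y # ys'" by (cases ys) auto
  have "f x \<le> g y" using Cons.prems(2)[of 0] ys by simp
  moreover have "sum_list (map f xs) \<le> sum_list (map g ys')"
    using Cons.IH[of ys'] Cons.prems ys by fastforce
  ultimately show ?case using ys by simp
qed

lemma sum_list_eq2:
  "length xs = length ys \<Longrightarrow> (\<And>i. i < length xs \<Longrightarrow> (f (xs!i)::nat) \<le> g (ys!i)) \<Longrightarrow>
   sum_list (map g ys) \<le> sum_list (map f xs) \<Longrightarrow> i < length xs \<Longrightarrow> f (xs!i) = g (ys!i)"
proof (induction xs arbitrary: ys i)
  case Nil then show ?case by simp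
next
  case (Cons x xs)
  then obtain y ys' where ys: "ys = y # ys'" by (cases ys) auto
  have fx: "f x \<le> g y" using Cons.prems(2)[of 0] ys by simp
  have le: "sum_list (map f xs) \<le> sum_list (map g ys')"
    using sum_list_mono2[of xs ys' f g] Cons.prems ys by fastforce
  have "f x = g y" "sum_list (map g ys') \<le> sum_list (map f xs)" using fx le Cons.prems(3) ys by auto
  then show ?case
  proof (cases i)
    case 0 then show ?thesis using \<open>f x = g y\<close> ys by simp
  next
    case (Suc j)
    then show ?thesis using Cons.IH[of ys' j] Cons.prems ys \<open>sum_list (map g ys') \<le> sum_list (map f xs)\<close>
      by fastforce
  qed
qed

lemma phiT_degx:
  assumes a: "ord1 a"
  shows "phiT a b s T \<noteq> 0 \<Longrightarrow> degxT s \<le> degx T"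
proof (induction s arbitrary: T)
  case (Lf l)
  then show ?case using a by (cases l) (auto simp: ord1_def)
next
  case (Nd ts)
  then have "prods (map (phiT a b) ts) T \<noteq> 0" by simp
  then obtain ss where ss: "ss \<in> fib (length ts) T" "\<forall>i<length ts. phiT a b (ts!i) (ss!i) \<noteq> 0"
    using prods_supp by fastforce
  have "sum_list (map degxT ts) \<le> sum_list (map degx ss)"
  proof (rule sum_list_mono2)
    show "length ts = length ss" using ss by (simp add: fib_def)
    fix i assume "i < length ts"
    then show "degxT (ts!i) \<le> degx (ss!i)" using Nd.IH[of "ts!i" "ss!i"] ss by simp
  qed
  then show ?case using ss degx_bul[of ss] by (simp add: fib_def)
qed

lemma phiO_degx: "ord1 a \<Longrightarrow> phiO a b S T \<noteq> 0 \<Longrightarrow> degx S \<le> degx T"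
  by (cases S) (auto simp: phiO_def degx_def dest: phiT_degx)

lemma phi_eq_sum:
  assumes a: "ord1 a" and A: "finite A" "{S. f S \<noteq> 0 \<and> degx S \<le> degx T} \<subseteq> A"
  shows "phi a b f T = (\<Sum>S\<in>A. f S * phiO a b S T)"
  unfolding phi_def
proof (rule sum.mono_neutral_left[OF A(1) A(2)])
  show "\<forall>S\<in>A - {S. f S \<noteq> 0 \<and> degx S \<le> degx T}. f S * phiO a b S T = 0"
  proof
    fix S assume "S \<in> A - {S. f S \<noteq> 0 \<and> degx S \<le> degx T}"
    then have "f S = 0 \<or> \<not> degx S \<le> degx T" by auto
    moreover have "\<not> degx S \<le> degx T \<Longrightarrow> phiO a b S T = 0" using phiO_degx[OF a, of b S T] by blast
    ultimately show "f S * phiO a b S T = 0" by auto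
  qed
qed

lemma phiO_fin: "ord1 a \<Longrightarrow> fin b \<Longrightarrow> fin (phiO a b S)"
proof -
  assume a: "ord1 a" and b: "fin b"
  have "fin (phiT a b s)" for s
  proof (induction s)
    case (Lf l) then show ?case using a b by (cases l) (auto simp: ord1_def)
  next
    case (Nd ts) then show ?case by simp (intro prods_fin, auto)
  qed
  moreover have "fin (oneser :: 'a pser)"
    by (rule fin_leI, rule finite_subset[of _ "{None}"]) (auto simp: oneser_def)
  ultimately show ?thesis by (cases S) (auto simp: phiO_def)
qed

lemma phi_nz:
  assumes "phi a b f T \<noteq> 0"
  shows "\<exists>S. f S \<noteq> 0 \<and> degx S \<le> degx T \<and> phiO a b S T \<noteq> 0"
proof -
  from assms obtain S where "S \<in> {S. f S \<noteq> 0 \<and> degx S \<le> degx T}" "f S * phiO a b S T \<noteq> 0"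
    unfolding phi_def by (meson sum.not_neutral_contains_not_neutral)
  then show ?thesis by auto
qed

lemma phi_fin:
  assumes a: "ord1 a" and b: "fin b" and f: "fin f"
  shows "fin (phi a b f)"
proof (rule fin_leI)
  fix n
  let ?A = "{S. f S \<noteq> 0 \<and> degx S \<le> n}"
  have "{T. phi a b f T \<noteq> 0 \<and> degx T \<le> n} \<subseteq> (\<Union>S\<in>?A. {T. phiO a b S T \<noteq> 0 \<and> degx T \<le> n})"
    using phi_nz by fastforce
  moreover have "finite (\<Union>S\<in>?A. {T. phiO a b S T \<noteq> 0 \<and> degx T \<le> n})"
    using fin_le[OF f] fin_le[OF phiO_fin[OF a b]] by blast
  ultimately show "finite {T. phi a b f T \<noteq> 0 \<and> degx T \<le> n}" by (rule finite_subset)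
qed

lemma phiO_bul: "phiO a b (bul ss) = prods (map (phiO a b) ss)"
proof -
  have "prods (map (phiO a b) ss) = prods ([] @ map (phiO a b) (filter (\<lambda>s. s \<noteq> None) ss))"
    using prods_filter[of "\<lambda>s. s \<noteq> None" "phiO a b" "[]" ss] by (simp add: phiO_def)
  also have "map (phiO a b) (filter (\<lambda>s. s \<noteq> None) ss) = map (phiT a b) (fl ss)"
    unfolding fl_def by (auto simp: phiO_def)
  finally have e: "prods (map (phiO a b) ss) = prods (map (phiT a b) (fl ss))" by simp
  show ?thesis
  proof (cases ss rule: bul_cases)
    case 1 then show ?thesis using e by (simp add: prods_Nil phiO_def)
  next
    case (2 t) then show ?thesis using e by (simp add: prods_single phiO_def)
  next
    case (3 ts) then show ?thesis using e by (simp add: phiO_def)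
  qed
qed

lemma prod_sum_lists:
  fixes h :: "nat \<Rightarrow> 'b \<Rightarrow> 'a::comm_semiring_1"
  assumes "finite B"
  shows "(\<Prod>i<m. \<Sum>S\<in>B. h i S) = (\<Sum>ss\<in>{ss. set ss \<subseteq> B \<and> length ss = m}. \<Prod>i<m. h i (ss!i))"
proof (induction m arbitrary: h)
  case 0
  have "{ss. set ss \<subseteq> B \<and> length ss = 0} = {[]}" by auto
  then show ?case by simp
next
  case (Suc m)
  let ?C = "\<lambda>m. {ss. set ss \<subseteq> B \<and> length ss = m}"
  have "(\<Prod>i<Suc m. \<Sum>S\<in>B. h i S) = (\<Sum>S\<in>B. h 0 S) * (\<Prod>i<m. \<Sum>S\<in>B. h (Suc i) S)"
    by (simp only: prod.lessThan_Suc_shift)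
  also have "\<dots> = (\<Sum>S\<in>B. h 0 S) * (\<Sum>ss\<in>?C m. \<Prod>i<m. h (Suc i) (ss!i))"
    using Suc.IH[of "\<lambda>i. h (Suc i)"] by simp
  also have "\<dots> = (\<Sum>S\<in>B. \<Sum>ss\<in>?C m. h 0 S * (\<Prod>i<m. h (Suc i) (ss!i)))"
    by (rule sum_product)
  also have "\<dots> = (\<Sum>p\<in>B \<times> ?C m. h 0 (fst p) * (\<Prod>i<m. h (Suc i) (snd p ! i)))"
    by (simp add: sum.cartesian_product split_def)
  also have "\<dots> = (\<Sum>ss\<in>?C (Suc m). \<Prod>i<Suc m. h i (ss!i))"
  proof (rule sum.reindex_bij_witness[where i = "\<lambda>ss. (hd ss, tl ss)" and j = "\<lambda>p. fst p # snd p"])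
    fix p assume "p \<in> B \<times> ?C m"
    then show "(hd (fst p # snd p), tl (fst p # snd p)) = p" "fst p # snd p \<in> ?C (Suc m)" by auto
    show "(\<Prod>i<Suc m. h i ((fst p # snd p)!i)) = h 0 (fst p) * (\<Prod>i<m. h (Suc i) (snd p ! i))"
      by (simp only: prod.lessThan_Suc_shift nth_Cons_0 nth_Cons_Suc)
  next
    fix ss assume ss: "ss \<in> ?C (Suc m)"
    then obtain x r where "ss = x # r" by (cases ss) auto
    then show "fst (hd ss, tl ss) # snd (hd ss, tl ss) = ss" "(hd ss, tl ss) \<in> B \<times> ?C m" using ss by auto
  qed
  finally show ?case .
qed

lemma prods_supp_B:
  assumes "prods fs S \<noteq> 0" "degx S \<le> n"
  shows "\<exists>ss\<in>fib (length fs) S. set ss \<subseteq> (\<Union>f\<in>set fs. {S. f S \<noteq> 0 \<and> degx S \<le> n})"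
proof -
  obtain ss where ss: "ss \<in> fib (length fs) S" "\<forall>i<length fs. (fs!i) (ss!i) \<noteq> 0"
    using prods_supp assms(1) by blast
  have "set ss \<subseteq> (\<Union>f\<in>set fs. {S. f S \<noteq> 0 \<and> degx S \<le> n})"
  proof
    fix s assume "s \<in> set ss"
    then obtain i where i: "i < length ss" "s = ss ! i" by (metis in_set_conv_nth)
    then have "degx s \<le> degx S" using ss(1) degx_bul[of ss] nth_le_sum_list[of i ss degx]
      by (auto simp: fib_def)
    then show "s \<in> (\<Union>f\<in>set fs. {S. f S \<noteq> 0 \<and> degx S \<le> n})" using assms(2) ss i by (auto simp: fib_def)
  qed
  then show ?thesis using ss(1) by blast
qed

lemma phi_prods:
  assumes a: "ord1 a" and b: "fin b" and fs: "\<forall>f\<in>set fs. fin f"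
  shows "phi a b (prods fs) T = prods (map (phi a b) fs) T"
proof -
  let ?m = "length fs" and ?n = "degx T"
  define B where "B = (\<Union>f\<in>set fs. {S. f S \<noteq> 0 \<and> degx S \<le> ?n})"
  define C where "C = {ss. set ss \<subseteq> B \<and> length ss = ?m}"
  have fB: "finite B" unfolding B_def using fs fin_le by auto
  have fC: "finite C" unfolding C_def using finite_lists_length_eq[OF fB] by simp
  let ?tup = "\<lambda>ss. \<Prod>i<?m. (fs!i) (ss!i)"
  have "phi a b (prods fs) T = (\<Sum>S\<in>bul ` C. prods fs S * phiO a b S T)"
  proof (rule phi_eq_sum[OF a])
    show "finite (bul ` C)" using fC by simp
    show "{S. prods fs S \<noteq> 0 \<and> degx S \<le> degx T} \<subseteq> bul ` C"
    proof
      fix S assume "S \<in> {S. prods fs S \<noteq> 0 \<and> degx S \<le> degx T}"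
      then obtain ss where "ss \<in> fib ?m S" "set ss \<subseteq> B" using prods_supp_B[of fs S ?n] unfolding B_def by auto
      then show "S \<in> bul ` C" unfolding C_def fib_def by auto
    qed
  qed
  also have "\<dots> = (\<Sum>S\<in>bul ` C. \<Sum>ss\<in>fib ?m S. ?tup ss * phiO a b (bul ss) T)"
    unfolding prods_i by (rule sum.cong[OF refl]) (auto simp: sum_distrib_right fib_def)
  also have "\<dots> = (\<Sum>S\<in>bul ` C. \<Sum>ss\<in>{ss\<in>C. bul ss = S}. ?tup ss * phiO a b (bul ss) T)"
  proof (rule sum.cong[OF refl], rule sum.mono_neutral_right[OF fin_fib])
    fix S assume "S \<in> bul ` C"
    show "{ss\<in>C. bul ss = S} \<subseteq> fib ?m S" by (auto simp: C_def fib_def)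
    show "\<forall>ss\<in>fib ?m S - {ss\<in>C. bul ss = S}. ?tup ss * phiO a b (bul ss) T = 0"
    proof
      fix ss assume ss: "ss \<in> fib ?m S - {ss\<in>C. bul ss = S}"
      show "?tup ss * phiO a b (bul ss) T = 0"
      proof (cases "?tup ss = 0")
        case False
        have nz: "\<forall>i<?m. (fs!i) (ss!i) \<noteq> 0"
        proof (intro allI impI notI)
          fix i assume "i < ?m" "(fs!i) (ss!i) = 0"
          then have "?tup ss = 0" by (intro prod_zero) auto
          with False show False by simp
        qed
        from ss have "\<not> set ss \<subseteq> B" by (auto simp: C_def fib_def)
        then obtain i where i: "i < length ss" "ss ! i \<notin> B" by (metis in_set_conv_nth subsetI)
        have li: "length ss = ?m" using ss by (simp add: fib_def)
        then have "fs ! i \<in> set fs" "(fs!i) (ss!i) \<noteq> 0" using i nz by auto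
        then have "degx (ss!i) > ?n" using i(2) unfolding B_def by force
        then have "degx (bul ss) > ?n" using degx_bul[of ss] nth_le_sum_list[of i ss degx] i(1) by linarith
        then have "phiO a b (bul ss) T = 0" using phiO_degx[OF a] by fastforce
        then show ?thesis by simp
      qed simp
    qed
  qed
  also have "\<dots> = (\<Sum>ss\<in>C. ?tup ss * phiO a b (bul ss) T)"
    by (rule sum.image_gen[OF fC, symmetric])
  also have "\<dots> = (\<Sum>ss\<in>C. ?tup ss * prods (map (phiO a b) ss) T)"
    by (simp add: phiO_bul)
  also have "\<dots> = prods (map (phi a b) fs) T"
  proof -
    have "prods (map (phi a b) fs) T = (\<Sum>tt\<in>fib ?m T. \<Prod>i<?m. phi a b (fs!i) (tt!i))"
      unfolding prods_i by simp
    also have "\<dots> = (\<Sum>tt\<in>fib ?m T. \<Prod>i<?m. \<Sum>S\<in>B. (fs!i) S * phiO a b S (tt!i))"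
    proof (rule sum.cong[OF refl], rule prod.cong[OF refl], rule phi_eq_sum[OF a fB])
      fix tt i assume tt: "tt \<in> fib ?m T" and i: "i \<in> {..<?m}"
      have "degx (tt!i) \<le> ?n" using tt i degx_bul[of tt] nth_le_sum_list[of i tt degx] by (auto simp: fib_def)
      then show "{S. (fs!i) S \<noteq> 0 \<and> degx S \<le> degx (tt!i)} \<subseteq> B" using i unfolding B_def by force
    qed
    also have "\<dots> = (\<Sum>tt\<in>fib ?m T. \<Sum>ss\<in>C. \<Prod>i<?m. (fs!i) (ss!i) * phiO a b (ss!i) (tt!i))"
      unfolding C_def by (rule sum.cong[OF refl], rule prod_sum_lists[OF fB])
    also have "\<dots> = (\<Sum>ss\<in>C. \<Sum>tt\<in>fib ?m T. ?tup ss * (\<Prod>i<?m. phiO a b (ss!i) (tt!i)))"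
      by (subst sum.swap) (simp add: prod.distrib)
    also have "\<dots> = (\<Sum>ss\<in>C. ?tup ss * prods (map (phiO a b) ss) T)"
      unfolding prods_i by (rule sum.cong[OF refl]) (auto simp: sum_distrib_left C_def)
    finally show ?thesis by simp
  qed
  finally show ?thesis .
qed


lemma fin_single: "fin (\<lambda>S. if S = S0 then c else 0)"
  by (rule fin_leI, rule finite_subset[of _ "{S0}"]) auto

lemma fin_oneser: "fin oneser" unfolding oneser_def by (rule fin_single)
lemma fin_xser: "fin xser" unfolding xser_def by (rule fin_single)

definition yser :: "('a::{zero,one}) pser" where
  "yser = (\<lambda>S. if S = Some (Lf Y) then 1 else 0)"

lemma phi_single: "ord1 a \<Longrightarrow> phi a b (\<lambda>S. if S = S0 then c else 0) T = c * phiO a b S0 T"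
  by (subst phi_eq_sum[where A = "{S0}"]) auto

lemma phi_oneser: "ord1 a \<Longrightarrow> phi a b oneser = oneser"
  by (rule ext) (simp add: oneser_def phi_single phiO_def)

lemma phi_xser: "ord1 a \<Longrightarrow> phi a b xser = a"
  by (rule ext) (simp add: xser_def phi_single phiO_def)

lemma phi_yser: "ord1 a \<Longrightarrow> phi a b yser = b"
  by (rule ext) (simp add: yser_def phi_single phiO_def)

lemma ord1_phi:
  assumes a: "ord1 a" and b: "fin b" and g: "ord1 g"
  shows "ord1 (phi a b g)"
proof -
  have "fin (phi a b g)" using phi_fin a b g by (auto simp: ord1_def)
  moreover have "1 \<le> degx T" if nz: "phi a b g T \<noteq> 0" for T
  proof -
    obtain S where "g S \<noteq> 0" "degx S \<le> degx T" using phi_nz[OF nz] by blast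
    then show ?thesis using g by (force simp: ord1_def)
  qed
  ultimately show ?thesis by (simp add: ord1_def)
qed

lemma phiO_comp:
  assumes a: "ord1 a" and b: "fin b" and g: "ord1 g" and h: "fin h"
  shows "phi a b (phiO g h S) = phiO (phi a b g) (phi a b h) S"
proof -
  have "phi a b (phiT g h s) = phiT (phi a b g) (phi a b h) s" for s
  proof (induction s)
    case (Lf l) then show ?case by (cases l) auto
  next
    case (Nd ts)
    have "phi a b (phiT g h (Nd ts)) = prods (map (phi a b) (map (phiT g h) ts))"
    proof (rule ext)
      fix T
      have "\<forall>f\<in>set (map (phiT g h) ts). fin f" using phiO_fin[OF g h, of "Some _"] by (auto simp: phiO_def)
      then show "phi a b (phiT g h (Nd ts)) T = prods (map (phi a b) (map (phiT g h) ts)) T"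
        using phi_prods[OF a b] by simp
    qed
    also have "map (phi a b) (map (phiT g h) ts) = map (phiT (phi a b g) (phi a b h)) ts"
      using Nd by simp
    finally show ?case by simp
  qed
  then show ?thesis using phi_oneser[OF a] by (cases S) (auto simp: phiO_def)
qed

lemma phi_comp:
  assumes a: "ord1 a" and b: "fin b" and g: "ord1 g" and h: "fin h" and f: "fin f"
  shows "phi a b (phi g h f) = phi (phi a b g) (phi a b h) f"
proof (rule ext)
  fix T
  let ?n = "degx T"
  define AS where "AS = {S. f S \<noteq> 0 \<and> degx S \<le> ?n}"
  define AU where "AU = (\<Union>S\<in>AS. {U. phiO g h S U \<noteq> 0 \<and> degx U \<le> ?n})"
  have fAS: "finite AS" unfolding AS_def using fin_le[OF f] .
  have fAU: "finite AU" unfolding AU_def using fAS fin_le[OF phiO_fin[OF g h]] by blast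
  have "phi a b (phi g h f) T = (\<Sum>U\<in>AU. phi g h f U * phiO a b U T)"
  proof (rule phi_eq_sum[OF a fAU])
    show "{U. phi g h f U \<noteq> 0 \<and> degx U \<le> degx T} \<subseteq> AU"
      unfolding AU_def AS_def using phi_nz by fastforce
  qed
  also have "\<dots> = (\<Sum>U\<in>AU. (\<Sum>S\<in>AS. f S * phiO g h S U) * phiO a b U T)"
  proof (rule sum.cong[OF refl])
    fix U assume "U \<in> AU"
    then have "degx U \<le> ?n" by (auto simp: AU_def)
    then have "phi g h f U = (\<Sum>S\<in>AS. f S * phiO g h S U)"
      using g by (intro phi_eq_sum[OF _ fAS]) (auto simp: AS_def)
    then show "phi g h f U * phiO a b U T = (\<Sum>S\<in>AS. f S * phiO g h S U) * phiO a b U T" by simp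
  qed
  also have "\<dots> = (\<Sum>S\<in>AS. f S * (\<Sum>U\<in>AU. phiO g h S U * phiO a b U T))"
    by (simp add: sum_distrib_left sum_distrib_right mult.assoc sum.swap[of _ AU])
  also have "\<dots> = (\<Sum>S\<in>AS. f S * phi a b (phiO g h S) T)"
  proof (rule sum.cong[OF refl])
    fix S assume "S \<in> AS"
    then have "phi a b (phiO g h S) T = (\<Sum>U\<in>AU. phiO g h S U * phiO a b U T)"
      by (intro phi_eq_sum[OF a fAU]) (auto simp: AU_def)
    then show "f S * (\<Sum>U\<in>AU. phiO g h S U * phiO a b U T) = f S * phi a b (phiO g h S) T" by simp
  qed
  also have "\<dots> = (\<Sum>S\<in>AS. f S * phiO (phi a b g) (phi a b h) S T)"
    using phiO_comp[OF a b g h] by simp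
  also have "\<dots> = phi (phi a b g) (phi a b h) f T"
    by (rule phi_eq_sum[OF ord1_phi[OF a b g] fAS, symmetric]) (auto simp: AS_def)
  finally show "phi a b (phi g h f) T = phi (phi a b g) (phi a b h) f T" .
qed

lemma fin_diff: fixes f g :: "('a::comm_ring_1) pser" shows "fin f \<Longrightarrow> fin g \<Longrightarrow> fin (\<lambda>S. f S - g S)"
proof (rule fin_leI)
  fix n assume "fin f" "fin g"
  then have "finite ({S. f S \<noteq> 0 \<and> degx S \<le> n} \<union> {S. g S \<noteq> 0 \<and> degx S \<le> n})" using fin_le by auto
  then show "finite {S. f S - g S \<noteq> 0 \<and> degx S \<le> n}" by (rule finite_subset[rotated]) auto
qed

lemma fin_add: fixes f g :: "('a::comm_ring_1) pser" shows "fin f \<Longrightarrow> fin g \<Longrightarrow> fin (\<lambda>S. f S + g S)"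
proof (rule fin_leI)
  fix n assume "fin f" "fin g"
  then have "finite ({S. f S \<noteq> 0 \<and> degx S \<le> n} \<union> {S. g S \<noteq> 0 \<and> degx S \<le> n})" using fin_le by auto
  then show "finite {S. f S + g S \<noteq> 0 \<and> degx S \<le> n}" by (rule finite_subset[rotated]) auto
qed

lemma fin_sum: fixes F :: "'b \<Rightarrow> ('a::comm_ring_1) pser" shows "finite I \<Longrightarrow> (\<And>i. i \<in> I \<Longrightarrow> fin (F i)) \<Longrightarrow> fin (\<lambda>S. \<Sum>i\<in>I. F i S)"
proof (rule fin_leI)
  fix n assume "finite I" "\<And>i. i \<in> I \<Longrightarrow> fin (F i)"
  then have "finite (\<Union>i\<in>I. {S. F i S \<noteq> 0 \<and> degx S \<le> n})" using fin_le by auto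
  then show "finite {S. (\<Sum>i\<in>I. F i S) \<noteq> 0 \<and> degx S \<le> n}"
    by (rule finite_subset[rotated]) (auto dest: sum.not_neutral_contains_not_neutral)
qed

lemma phi_diff:
  assumes a: "ord1 a" and f: "fin f" and g: "fin g"
  shows "phi a b (\<lambda>S. f S - g S) T = phi a b f T - phi a b g T"
proof -
  let ?A = "{S. f S \<noteq> 0 \<and> degx S \<le> degx T} \<union> {S. g S \<noteq> 0 \<and> degx S \<le> degx T}"
  have fA: "finite ?A" using fin_le f g by auto
  have "phi a b (\<lambda>S. f S - g S) T = (\<Sum>S\<in>?A. (f S - g S) * phiO a b S T)"
    by (rule phi_eq_sum[OF a fA]) auto
  also have "\<dots> = (\<Sum>S\<in>?A. f S * phiO a b S T) - (\<Sum>S\<in>?A. g S * phiO a b S T)"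
    by (simp add: left_diff_distrib sum_subtractf)
  also have "\<dots> = phi a b f T - phi a b g T"
    by (subst (1 2) phi_eq_sum[OF a fA]) auto
  finally show ?thesis .
qed

lemma phi_add:
  assumes a: "ord1 a" and f: "fin f" and g: "fin g"
  shows "phi a b (\<lambda>S. f S + g S) T = phi a b f T + phi a b g T"
proof -
  let ?A = "{S. f S \<noteq> 0 \<and> degx S \<le> degx T} \<union> {S. g S \<noteq> 0 \<and> degx S \<le> degx T}"
  have fA: "finite ?A" using fin_le f g by auto
  have "phi a b (\<lambda>S. f S + g S) T = (\<Sum>S\<in>?A. (f S + g S) * phiO a b S T)"
    by (rule phi_eq_sum[OF a fA]) auto
  also have "\<dots> = (\<Sum>S\<in>?A. f S * phiO a b S T) + (\<Sum>S\<in>?A. g S * phiO a b S T)"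
    by (simp add: distrib_right sum.distrib)
  also have "\<dots> = phi a b f T + phi a b g T"
    by (subst (1 2) phi_eq_sum[OF a fA]) auto
  finally show ?thesis .
qed

lemma phi_sum:
  assumes a: "ord1 a" and I: "finite I" and F: "\<And>i. i \<in> I \<Longrightarrow> fin (F i)"
  shows "phi a b (\<lambda>S. \<Sum>i\<in>I. F i S) T = (\<Sum>i\<in>I. phi a b (F i) T)"
proof -
  let ?A = "\<Union>i\<in>I. {S. F i S \<noteq> 0 \<and> degx S \<le> degx T}"
  have fA: "finite ?A" using fin_le F I by auto
  have "phi a b (\<lambda>S. \<Sum>i\<in>I. F i S) T = (\<Sum>S\<in>?A. (\<Sum>i\<in>I. F i S) * phiO a b S T)"
    by (rule phi_eq_sum[OF a fA]) (auto dest: sum.not_neutral_contains_not_neutral)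
  also have "\<dots> = (\<Sum>i\<in>I. \<Sum>S\<in>?A. F i S * phiO a b S T)"
    by (simp add: sum_distrib_right sum.swap[of _ ?A])
  also have "\<dots> = (\<Sum>i\<in>I. phi a b (F i) T)"
  proof (rule sum.cong[OF refl])
    fix i assume "i \<in> I"
    then show "(\<Sum>S\<in>?A. F i S * phiO a b S T) = phi a b (F i) T"
      by (intro phi_eq_sum[OF a fA, symmetric]) auto
  qed
  finally show ?thesis .
qed

lemma suppx_phiO:
  assumes a: "suppx a" and b: "suppx b"
  shows "suppx (phiO a b S)"
proof -
  have "suppx (phiT a b s)" for s
  proof (induction s)
    case (Lf l) then show ?case using a b by (cases l) auto
  next
    case (Nd ts) then show ?case by simp (intro prods_suppx, auto)
  qed
  moreover have "suppx (oneser :: 'a pser)" by (simp add: suppx_def oneser_def okx_def)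
  ultimately show ?thesis by (cases S) (auto simp: phiO_def)
qed

lemma suppx_phi:
  assumes a: "suppx a" and b: "suppx b"
  shows "suppx (phi a b f)"
  unfolding suppx_def
proof (intro allI impI)
  fix T assume "phi a b f T \<noteq> 0"
  then obtain S where "phiO a b S T \<noteq> 0" using phi_nz by blast
  then show "okx T" using suppx_phiO[OF a b, of S] by (simp add: suppx_def)
qed

lemma phiT_Yfree: "degyT t = 0 \<Longrightarrow> phiT a b t = phiT a b' t"
proof (induction t)
  case (Lf l) then show ?case by (cases l) auto
next
  case (Nd ts)
  then have "\<forall>t\<in>set ts. degyT t = 0" by simp
  then have e: "map (phiT a b) ts = map (phiT a b') ts" by (intro map_cong[OF refl]) (use Nd.IH in auto)
  show ?case by (simp only: phiT.simps e)
qed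

lemma fl_map_Some: "fl (map Some ts) = ts"
  by (induction ts) auto

lemma prod_indicator:
  fixes m :: nat shows "(\<Prod>i<m. if P i then (1::'a::comm_ring_1) else 0) = (if (\<forall>i<m. P i) then 1 else 0)"
proof (cases "\<forall>i<m. P i")
  case True then show ?thesis by simp
next
  case False
  then obtain i where "i < m" "\<not> P i" by auto
  have "(\<Prod>i<m. if P i then (1::'a) else 0) = 0"
    by (rule prod_zero) (use \<open>i < m\<close> \<open>\<not> P i\<close> in auto)
  then show ?thesis using False by simp
qed

lemma sum_fib_map_Some:
  assumes "2 \<le> length ts"
  shows "(\<Sum>ss\<in>fib (length ts) T. if ss = map Some ts then (1::'a::comm_ring_1) else 0) =
         (if T = Some (Nd ts) then 1 else 0)"
proof -
  have "bul (map Some ts) = Some (Nd ts)" using assms by (intro fl_multi) (simp_all add: fl_map_Some)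
  then have "(map Some ts \<in> fib (length ts) T) = (T = Some (Nd ts))" by (auto simp: fib_def)
  then show ?thesis by (simp add: sum.delta[OF fin_fib])
qed

lemma list_eq_map_Some: "length ss = length ts \<Longrightarrow> (\<forall>i<length ts. ss ! i = Some (ts ! i)) = (ss = map Some ts)"
  by (auto simp: list_eq_iff_nth_eq)

lemma phiO_xser_id:
  assumes "okx S"
  shows "phiO xser b S = (\<lambda>T. if T = S then 1 else 0)"
proof -
  have "wfT t \<Longrightarrow> degyT t = 0 \<Longrightarrow> phiT xser b t = (\<lambda>T. if T = Some t then 1 else 0)" for t
  proof (induction t)
    case (Lf l) then show ?case by (cases l) (auto simp: xser_def)
  next
    case (Nd ts)
    have ih: "\<forall>i<length ts. phiT xser b (ts!i) = (\<lambda>T. if T = Some (ts!i) then 1 else 0)"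
      using Nd by (auto simp: sum_list_eq_0_iff)
    show ?case
    proof (rule ext)
      fix T
      have "phiT xser b (Nd ts) T = (\<Sum>ss\<in>fib (length ts) T. \<Prod>i<length ts. phiT xser b (ts!i) (ss!i))"
        by (simp add: prods_i)
      also have "\<dots> = (\<Sum>ss\<in>fib (length ts) T. if ss = map Some ts then 1 else 0)"
      proof (rule sum.cong[OF refl])
        fix ss assume "ss \<in> fib (length ts) T"
        then have l: "length ss = length ts" by (simp add: fib_def)
        have "(\<Prod>i<length ts. phiT xser b (ts!i) (ss!i)) = (\<Prod>i<length ts. if ss!i = Some (ts!i) then 1 else 0)"
          using ih by simp
        also have "\<dots> = (if ss = map Some ts then 1 else 0)"
          using list_eq_map_Some[OF l] by (simp add: prod_indicator)
        finally show "(\<Prod>i<length ts. phiT xser b (ts!i) (ss!i)) = (if ss = map Some ts then 1 else 0)" .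
      qed
      also have "\<dots> = (if T = Some (Nd ts) then 1 else 0)"
        using Nd.prems by (intro sum_fib_map_Some) simp
      finally show "phiT xser b (Nd ts) T = (if T = Some (Nd ts) then 1 else 0)" .
    qed
  qed
  then show ?thesis using assms by (cases S) (auto simp: phiO_def okx_def oneser_def)
qed

lemma ord1_xser: "ord1 xser"
  using fin_xser by (simp add: ord1_def) (simp add: xser_def degx_def)

lemma phi_xser_id:
  assumes f: "fin f" and s: "suppx f"
  shows "phi xser b f = f"
proof (rule ext)
  fix T
  let ?A = "{S. f S \<noteq> 0 \<and> degx S \<le> degx T}"
  have "phi xser b f T = (\<Sum>S\<in>?A. f S * phiO xser b S T)" by (simp add: phi_def)
  also have "\<dots> = (\<Sum>S\<in>?A. if T = S then f S else 0)"
    by (rule sum.cong[OF refl]) (use s in \<open>auto simp: suppx_def phiO_xser_id\<close>)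
  also have "\<dots> = f T" using fin_le[OF f] by (auto simp: sum.delta)
  finally show "phi xser b f T = f T" .
qed


definition gcond :: "('a::comm_ring_1) pser \<Rightarrow> bool" where
  "gcond g = (ord1 g \<and> g (Some (Lf X)) = 1 \<and> (\<forall>S. g S \<noteq> 0 \<longrightarrow> S = Some (Lf X) \<or> 2 \<le> degx S))"

lemma phiT_tri:
  assumes g: "gcond g"
  shows "wfT t \<Longrightarrow> degyT t = 0 \<Longrightarrow> degx T \<le> degxT t \<Longrightarrow> phiT g b t T = (if T = Some t then 1 else 0)"
proof (induction t arbitrary: T)
  case (Lf l)
  then have l: "l = X" by (cases l) auto
  show ?case
  proof (cases "T = Some (Lf X)")
    case True then show ?thesis using g l by (simp add: gcond_def)
  next
    case False
    have gc: "\<forall>S. g S \<noteq> 0 \<longrightarrow> S = Some (Lf X) \<or> 2 \<le> degx S" using g by (simp add: gcond_def)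
    have d1: "degx T \<le> 1" using Lf.prems l by simp
    have "g T = 0"
    proof (rule ccontr)
      assume "g T \<noteq> 0"
      then have "T = Some (Lf X) \<or> 2 \<le> degx T" using gc by blast
      then show False using False d1 by linarith
    qed
    then show ?thesis using l False by simp
  qed
next
  case (Nd ts)
  have og: "ord1 g" using g by (simp add: gcond_def)
  have wts: "\<forall>i<length ts. wfT (ts!i) \<and> degyT (ts!i) = 0"
    using Nd.prems by (auto simp: sum_list_eq_0_iff)
  have IH: "\<And>i U. i < length ts \<Longrightarrow> degx U \<le> degxT (ts!i) \<Longrightarrow> phiT g b (ts!i) U = (if U = Some (ts!i) then 1 else 0)"
  proof -
    fix i U assume i: "i < length ts" and d: "degx U \<le> degxT (ts!i)"
    have "ts!i \<in> set ts" using i by (rule nth_mem)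
    then show "phiT g b (ts!i) U = (if U = Some (ts!i) then 1 else 0)"
      using Nd.IH[OF \<open>ts!i \<in> set ts\<close>] wts i d by simp
  qed
  have "phiT g b (Nd ts) T = (\<Sum>ss\<in>fib (length ts) T. \<Prod>i<length ts. phiT g b (ts!i) (ss!i))"
    by (simp add: prods_i)
  also have "\<dots> = (\<Sum>ss\<in>fib (length ts) T. if ss = map Some ts then 1 else 0)"
  proof (rule sum.cong[OF refl])
    fix ss assume ss: "ss \<in> fib (length ts) T"
    then have l: "length ss = length ts" and bs: "bul ss = T" by (auto simp: fib_def)
    let ?P = "\<Prod>i<length ts. phiT g b (ts!i) (ss!i)"
    show "?P = (if ss = map Some ts then 1 else 0)"
    proof (cases "?P = 0")
      case False
      have nz: "\<forall>i<length ts. phiT g b (ts!i) (ss!i) \<noteq> 0"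
      proof (intro allI impI notI)
        fix i assume "i < length ts" "phiT g b (ts!i) (ss!i) = 0"
        then have "?P = 0" by (intro prod_zero) auto
        with False show False by simp
      qed
      have le: "\<And>i. i < length ts \<Longrightarrow> degxT (ts!i) \<le> degx (ss!i)"
        using nz phiT_degx[OF og] by blast
      have sm_le: "sum_list (map degx ss) \<le> sum_list (map degxT ts)"
        using Nd.prems(3) degx_bul[of ss] bs by simp
      have eq: "\<And>i. i < length ts \<Longrightarrow> degxT (ts!i) = degx (ss!i)"
        by (rule sum_list_eq2[of ts ss degxT degx]) (simp_all add: l le sm_le)
      have "\<forall>i<length ts. ss!i = Some (ts!i)"
      proof (intro allI impI)
        fix i assume i: "i < length ts"
        have "phiT g b (ts!i) (ss!i) = (if ss!i = Some (ts!i) then 1 else 0)"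
          using IH[OF i] eq[OF i] by simp
        then show "ss!i = Some (ts!i)" using nz i by (auto split: if_splits)
      qed
      then have sm: "ss = map Some ts" using list_eq_map_Some[OF l] by simp
      have "?P = (\<Prod>i<length ts. 1)"
      proof (rule prod.cong[OF refl])
        fix i assume "i \<in> {..<length ts}"
        then have i: "i < length ts" by simp
        then show "phiT g b (ts!i) (ss!i) = 1"
          using IH[OF i, of "ss!i"] eq[OF i] sm by simp
      qed
      then show ?thesis using sm by simp
    next
      case True
      have "ss \<noteq> map Some ts"
      proof
        assume sm: "ss = map Some ts"
        have "?P = (\<Prod>i<length ts. 1)"
        proof (rule prod.cong[OF refl])
          fix i assume "i \<in> {..<length ts}"
          then have i: "i < length ts" by simp
          then show "phiT g b (ts!i) (ss!i) = 1"
            using IH[OF i, of "ss!i"] sm by (simp add: degx_def)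
        qed
        with True show False by simp
      qed
      then show ?thesis using True by simp
    qed
  qed
  also have "\<dots> = (if T = Some (Nd ts) then 1 else 0)"
    using Nd.prems by (intro sum_fib_map_Some) simp
  finally show ?case .
qed

lemma phiO_tri:
  assumes g: "gcond g" and S: "okx S" and T: "degx T \<le> degx S"
  shows "phiO g b S T = (if T = S then 1 else 0)"
proof (cases S)
  case None
  then show ?thesis by (simp add: phiO_def oneser_def)
next
  case (Some t)
  then show ?thesis using phiT_tri[OF g, of t T b] S T by (simp add: phiO_def okx_def degx_def)
qed

lemma phi_inj:
  assumes g: "gcond g" and f: "fin f" and s: "suppx f" and z: "\<And>T. phi g b f T = 0"
  shows "f S = 0"
proof (rule ccontr)
  assume "f S \<noteq> 0"
  then obtain S0 where S0: "f S0 \<noteq> 0" and min: "\<forall>S. f S \<noteq> 0 \<longrightarrow> degx S0 \<le> degx S"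
    using ex_has_least_nat[of "\<lambda>S. f S \<noteq> 0" S degx] by blast
  let ?A = "{S. f S \<noteq> 0 \<and> degx S \<le> degx S0}"
  have "phi g b f S0 = (\<Sum>S\<in>?A. f S * phiO g b S S0)" by (simp add: phi_def)
  also have "\<dots> = (\<Sum>S\<in>?A. if S0 = S then f S else 0)"
  proof (rule sum.cong[OF refl])
    fix S assume "S \<in> ?A"
    then have "degx S0 \<le> degx S" "okx S" using min s by (auto simp: suppx_def)
    then show "f S * phiO g b S S0 = (if S0 = S then f S else 0)" using phiO_tri[OF g] by simp
  qed
  also have "\<dots> = f S0" using fin_le[OF f] S0 by (simp add: sum.delta')
  finally show False using z S0 by simp
qed


section \<open>The universal derivation\<close>

lemma sum_list_map_nth: "sum_list (map f xs) = (\<Sum>i<length xs. f (xs!i))"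
  by (simp add: sum_list_sum_nth atLeast0LessThan)

lemma sum_list_one:
  assumes "sum_list (map f xs) = (1::nat)"
  shows "\<exists>j<length xs. f (xs!j) = 1 \<and> (\<forall>l<length xs. l \<noteq> j \<longrightarrow> f (xs!l) = 0)"
proof -
  have s: "(\<Sum>i<length xs. f (xs!i)) = 1" using assms by (simp add: sum_list_map_nth)
  then obtain j where j: "j < length xs" "f (xs!j) \<noteq> 0"
    by (metis (no_types, lifting) lessThan_iff one_neq_zero sum.not_neutral_contains_not_neutral)
  have "(\<Sum>i<length xs. f (xs!i)) = f (xs!j) + (\<Sum>i\<in>{..<length xs} - {j}. f (xs!i))"
    using j by (intro sum.remove) auto
  then have e: "f (xs!j) + (\<Sum>i\<in>{..<length xs} - {j}. f (xs!i)) = 1" using s by simp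
  then have f1: "f (xs!j) = 1" using j(2) by linarith
  then have "(\<Sum>i\<in>{..<length xs} - {j}. f (xs!i)) = 0" using e by linarith
  then have "\<forall>l\<in>{..<length xs} - {j}. f (xs!l) = 0" by (simp add: sum_eq_0_iff)
  then show ?thesis using j(1) f1 by auto
qed

lemma sum_list_one_conv:
  assumes "j < length xs" "f (xs!j) = (1::nat)" "\<forall>l<length xs. l \<noteq> j \<longrightarrow> f (xs!l) = 0"
  shows "sum_list (map f xs) = 1"
proof -
  have "(\<Sum>i<length xs. f (xs!i)) = f (xs!j) + (\<Sum>i\<in>{..<length xs} - {j}. f (xs!i))"
    using assms by (intro sum.remove) auto
  also have "(\<Sum>i\<in>{..<length xs} - {j}. f (xs!i)) = 0" using assms(3) by (intro sum.neutral) auto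
  finally show ?thesis using assms(2) by (simp add: sum_list_map_nth)
qed

lemma dser_simps: "dser f None = 0" "dser f (Some t) = (if degyT t = 1 then f (Some (allX t)) else 0)"
  by (simp_all add: dser_def)

lemma dser_supp: "dser f S \<noteq> 0 \<Longrightarrow> degyO S = 1"
  by (cases S) (auto simp: dser_def degyO_def split: if_splits)

lemma dser_diff: "dser (\<lambda>S. f S - g S) = (\<lambda>S. dser f S - dser g S)"
  by (rule ext) (simp add: dser_def split: option.splits)

lemma fin_allX_pre: "finite {t. allX t = u}"
proof (induction u)
  case (Lf l)
  have "{t. allX t = Lf l} \<subseteq> {Lf X, Lf Y}"
  proof
    fix t assume "t \<in> {t. allX t = Lf l}"
    then show "t \<in> {Lf X, Lf Y}" by (cases t; cases "case t of Lf m \<Rightarrow> m") auto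
  qed
  then show ?case by (rule finite_subset) simp
next
  case (Nd us)
  let ?B = "\<Union>u\<in>set us. {t. allX t = u}"
  have fB: "finite ?B" using Nd by auto
  have "{t. allX t = Nd us} \<subseteq> Nd ` {ts. set ts \<subseteq> ?B \<and> length ts = length us}"
  proof
    fix t assume "t \<in> {t. allX t = Nd us}"
    then obtain ts where t: "t = Nd ts" "map allX ts = us" by (cases t) auto
    then have "set ts \<subseteq> ?B" by auto
    then show "t \<in> Nd ` {ts. set ts \<subseteq> ?B \<and> length ts = length us}" using t by auto
  qed
  then show ?case using finite_lists_length_eq[OF fB] finite_subset by blast
qed

lemma dser_fin:
  assumes f: "fin f"
  shows "fin (dser f)"
proof (rule fin_leI)
  fix n
  let ?F = "{S. f S \<noteq> 0 \<and> degx S \<le> Suc n}"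
  have fF: "finite ?F" using fin_le[OF f] .
  have "{S. dser f S \<noteq> 0 \<and> degx S \<le> n} \<subseteq> Some ` (\<Union>S\<in>?F. {t. allX t = the S})"
  proof
    fix S assume S: "S \<in> {S. dser f S \<noteq> 0 \<and> degx S \<le> n}"
    then obtain t where t: "S = Some t" "degyT t = 1" "f (Some (allX t)) \<noteq> 0"
      by (cases S) (auto simp: dser_def split: if_splits)
    have "degx (Some (allX t)) = degxT t + 1" using allX_props[of t] degT_split[of t] t(2)
      by (simp add: degx_def)
    then have "Some (allX t) \<in> ?F" using S t by (simp add: degx_def)
    then show "S \<in> Some ` (\<Union>S\<in>?F. {t. allX t = the S})" using t by force
  qed
  moreover have "finite (Some ` (\<Union>S\<in>?F. {t. allX t = the S}))" using fF fin_allX_pre by blast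
  ultimately show "finite {S. dser f S \<noteq> 0 \<and> degx S \<le> n}" by (rule finite_subset)
qed

definition Mx :: "ptree option list \<Rightarrow> ptree option list" where
  "Mx ss = map (map_option allX) ss"

lemma fl_Mx: "fl (Mx ss) = map allX (fl ss)"
  by (induction ss) (auto simp: Mx_def split: option.splits)

lemma bul_Mx: "bul (Mx ss) = map_option allX (bul ss)"
proof (cases ss rule: bul_cases)
  case 1 then show ?thesis using fl_Mx[of ss] by (simp add: bul_fl)
next
  case (2 t) then show ?thesis using fl_Mx[of ss] by (simp add: bul_fl)
next
  case (3 ts)
  then show ?thesis using fl_Mx[of ss] fl_multi[of "Mx ss" "map allX ts"] by simp
qed

lemma list_eq_fl: "map (\<lambda>s. s = None) ss1 = map (\<lambda>s. s = None) ss2 \<Longrightarrow> fl ss1 = fl ss2 \<Longrightarrow> ss1 = ss2"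
proof (induction ss1 arbitrary: ss2)
  case Nil then show ?case by simp
next
  case (Cons s1 r1)
  then obtain s2 r2 where s2: "ss2 = s2 # r2" by (cases ss2) auto
  show ?case
  proof (cases s1)
    case None
    then have "s2 = None" using Cons.prems s2 by simp
    then show ?thesis using Cons None s2 by simp
  next
    case (Some t1)
    then obtain t2 where "s2 = Some t2" using Cons.prems s2 by (cases s2) auto
    then show ?thesis using Cons Some s2 by simp
  qed
qed

primrec fill :: "ptree option list \<Rightarrow> ptree list \<Rightarrow> ptree option list" where
  "fill [] L = []"
| "fill (s # ss) L = (case s of None \<Rightarrow> None # fill ss L
     | Some _ \<Rightarrow> (case L of [] \<Rightarrow> [] | t # L' \<Rightarrow> Some t # fill ss L'))"

lemma fill_props:
  "length L = length (fl ss) \<Longrightarrow> map allX L = fl ss \<Longrightarrow>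
   fl (fill ss L) = L \<and> length (fill ss L) = length ss \<and> Mx (fill ss L) = ss"
proof (induction ss arbitrary: L)
  case Nil then show ?case by (simp add: Mx_def)
next
  case (Cons s ss)
  show ?case
  proof (cases s)
    case None then show ?thesis using Cons by (simp add: Mx_def)
  next
    case (Some u)
    then obtain t L' where L: "L = t # L'" using Cons.prems by (cases L) auto
    then show ?thesis using Cons Some by (simp add: Mx_def)
  qed
qed

lemma Mx_bij:
  "bij_betw Mx (fib m (Some T)) (fib m (Some (allX T)))"
proof -
  have inj: "inj_on Mx (fib m (Some T))"
  proof
    fix ss1 ss2 assume s1: "ss1 \<in> fib m (Some T)" and s2: "ss2 \<in> fib m (Some T)" and e: "Mx ss1 = Mx ss2"
    have n: "map (\<lambda>s. s = None) ss1 = map (\<lambda>s. s = None) ss2"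
    proof -
      have "map (\<lambda>s. s = None) (Mx ss1) = map (\<lambda>s. s = None) (Mx ss2)" using e by simp
      then show ?thesis by (simp add: Mx_def o_def)
    qed
    have lf: "map allX (fl ss1) = map allX (fl ss2)" using e fl_Mx by metis
    then have ll: "length (fl ss1) = length (fl ss2)" by (metis length_map)
    have b1: "bul ss1 = Some T" and b2: "bul ss2 = Some T" using s1 s2 by (auto simp: fib_def)
    have "fl ss1 = fl ss2"
      using bul_Some[OF b1] bul_Some[OF b2] ll by auto
    then show "ss1 = ss2" using list_eq_fl n by blast
  qed
  have img: "Mx ` fib m (Some T) = fib m (Some (allX T))"
  proof
    show "Mx ` fib m (Some T) \<subseteq> fib m (Some (allX T))"
      by (auto simp: fib_def bul_Mx) (simp add: Mx_def)
  next
    show "fib m (Some (allX T)) \<subseteq> Mx ` fib m (Some T)"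
    proof
      fix ss' assume ss': "ss' \<in> fib m (Some (allX T))"
      then have b: "bul ss' = Some (allX T)" and l: "length ss' = m" by (auto simp: fib_def)
      obtain L where L: "map allX L = fl ss'" "fl (fill ss' L) = L \<Longrightarrow> bul (fill ss' L) = Some T"
      proof (cases "fl ss' = [allX T]")
        case True
        show ?thesis by (rule that[of "[T]"]) (use True fl_single in auto)
      next
        case False
        then obtain us where us: "allX T = Nd us" "2 \<le> length us" "fl ss' = us" using bul_Some[OF b] by auto
        then obtain ts where ts: "T = Nd ts" "map allX ts = us" by (cases T) auto
        show ?thesis
        proof (rule that[of ts])
          show "map allX ts = fl ss'" using ts us by simp
          show "fl (fill ss' ts) = ts \<Longrightarrow> bul (fill ss' ts) = Some T"
            using fl_multi[of "fill ss' ts" ts] ts us by auto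
        qed
      qed
      have "length L = length (fl ss')" using L(1) by (metis length_map)
      note fp = fill_props[OF this L(1)]
      then have "fill ss' L \<in> fib m (Some T)" using L(2) l by (simp add: fib_def)
      then show "ss' \<in> Mx ` fib m (Some T)" using fp by force
    qed
  qed
  show ?thesis using inj img by (simp add: bij_betw_def)
qed

definition Yfree :: "('a::zero) pser \<Rightarrow> bool" where
  "Yfree f = (\<forall>S. f S \<noteq> 0 \<longrightarrow> degyO S = 0)"

lemma prods_dslot_degy:
  assumes Y: "\<forall>f\<in>set fs. Yfree f" and j: "j < length fs"
    and nz: "prods (fs[j := dser (fs!j)]) S \<noteq> 0"
  shows "degyO S = 1"
proof -
  obtain ss where ss: "ss \<in> fib (length fs) S" "\<forall>i<length fs. ((fs[j := dser (fs!j)])!i) (ss!i) \<noteq> 0"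
    using prods_supp[OF nz] by auto
  have l: "length ss = length fs" using ss by (simp add: fib_def)
  have "degyO (ss!j) = 1" using ss(2) j dser_supp by fastforce
  moreover have "\<forall>l<length ss. l \<noteq> j \<longrightarrow> degyO (ss!l) = 0"
  proof (intro allI impI)
    fix l assume "l < length ss" "l \<noteq> j"
    then have "(fs!l) (ss!l) \<noteq> 0" "fs!l \<in> set fs" using ss(2) l by auto
    then show "degyO (ss!l) = 0" using Y by (auto simp: Yfree_def)
  qed
  ultimately have "sum_list (map degyO ss) = 1" using sum_list_one_conv[of j ss degyO] j l by simp
  then show ?thesis using ss(1) degy_bul[of ss] by (simp add: fib_def)
qed

lemma dser_prods:
  assumes Y: "\<forall>f\<in>set fs. Yfree f"
  shows "dser (prods fs) S = (\<Sum>j<length fs. prods (fs[j := dser (fs!j)]) S)"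
proof (cases "degyO S = 1")
  case False
  then have "dser (prods fs) S = 0" using dser_supp by blast
  moreover have "prods (fs[j := dser (fs!j)]) S = 0" if "j < length fs" for j
    using prods_dslot_degy[OF Y that] False by blast
  ultimately show ?thesis by simp
next
  case True
  then obtain T where T: "S = Some T" "degyT T = 1" by (cases S) (auto simp: degyO_def)
  let ?m = "length fs"
  let ?tup = "\<lambda>gs ss. \<Prod>i<?m. (gs!i) (ss!i)"
  have key: "(\<Sum>j<?m. ?tup (fs[j := dser (fs!j)]) ss) = ?tup fs (Mx ss)" if ss: "ss \<in> fib ?m S" for ss
  proof -
    have l: "length ss = ?m" and b: "bul ss = Some T" using ss T by (auto simp: fib_def)
    have "sum_list (map degyO ss) = 1" using degy_bul[of ss] b T by (simp add: degyO_def)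
    then obtain j0 where j0: "j0 < ?m" "degyO (ss!j0) = 1" "\<forall>l<?m. l \<noteq> j0 \<longrightarrow> degyO (ss!l) = 0"
      using sum_list_one[of degyO ss] l by auto
    have other: "?tup (fs[j := dser (fs!j)]) ss = 0" if "j < ?m" "j \<noteq> j0" for j
    proof -
      have "dser (fs!j) (ss!j) = 0" using j0(3) that dser_supp by fastforce
      then show ?thesis using that by (intro prod_zero) (auto intro!: bexI[of _ j])
    qed
    have "(\<Sum>j<?m. ?tup (fs[j := dser (fs!j)]) ss) = ?tup (fs[j0 := dser (fs!j0)]) ss
       + (\<Sum>j\<in>{..<?m} - {j0}. ?tup (fs[j := dser (fs!j)]) ss)"
      using j0(1) by (intro sum.remove) auto
    also have "(\<Sum>j\<in>{..<?m} - {j0}. ?tup (fs[j := dser (fs!j)]) ss) = 0"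
      using other by (intro sum.neutral) auto
    finally have "(\<Sum>j<?m. ?tup (fs[j := dser (fs!j)]) ss) = ?tup (fs[j0 := dser (fs!j0)]) ss" by simp
    also have "\<dots> = ?tup fs (Mx ss)"
    proof (rule prod.cong[OF refl])
      fix l assume "l \<in> {..<?m}"
      then have lm: "l < ?m" by simp
      show "((fs[j0 := dser (fs!j0)])!l) (ss!l) = (fs!l) (Mx ss ! l)"
      proof (cases "l = j0")
        case True
        obtain t where t: "ss!j0 = Some t" "degyT t = 1" using j0(2) by (cases "ss!j0") (auto simp: degyO_def)
        then show ?thesis using True lm l by (simp add: Mx_def dser_def)
      next
        case False
        then have "degyO (ss!l) = 0" using j0(3) lm by simp
        then have "map_option allX (ss!l) = ss!l" by (cases "ss!l") (auto simp: degyO_def allX_Yfree)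
        then show ?thesis using False lm l by (simp add: Mx_def)
      qed
    qed
    finally show ?thesis .
  qed
  have "(\<Sum>j<?m. prods (fs[j := dser (fs!j)]) S) = (\<Sum>j<?m. \<Sum>ss\<in>fib ?m S. ?tup (fs[j := dser (fs!j)]) ss)"
    unfolding prods_i by simp
  also have "\<dots> = (\<Sum>ss\<in>fib ?m S. \<Sum>j<?m. ?tup (fs[j := dser (fs!j)]) ss)"
    by (rule sum.swap)
  also have "\<dots> = (\<Sum>ss\<in>fib ?m (Some T). ?tup fs (Mx ss))"
    using key T by simp
  also have "\<dots> = (\<Sum>ss\<in>fib ?m (Some (allX T)). ?tup fs ss)"
    by (rule sum.reindex_bij_betw[OF Mx_bij])
  also have "\<dots> = dser (prods fs) S"
    using T by (simp add: dser_def prods_i)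
  finally show ?thesis by simp
qed


section \<open>Chain rule\<close>

lemma Yfree_prods: "\<forall>f\<in>set fs. Yfree f \<Longrightarrow> Yfree (prods fs)"
  unfolding Yfree_def
proof (intro allI impI)
  fix S assume a: "\<forall>f\<in>set fs. \<forall>S. f S \<noteq> 0 \<longrightarrow> degyO S = 0" and "prods fs S \<noteq> 0"
  then obtain ss where ss: "ss \<in> fib (length fs) S" "\<forall>i<length fs. (fs!i) (ss!i) \<noteq> 0"
    using prods_supp by blast
  have "\<forall>s\<in>set ss. degyO s = 0"
  proof
    fix s assume "s \<in> set ss"
    then obtain i where i: "i < length ss" "s = ss!i" by (metis in_set_conv_nth)
    then have "fs!i \<in> set fs" "(fs!i) s \<noteq> 0" using ss by (auto simp: fib_def)
    then show "degyO s = 0" using a by blast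
  qed
  then have "sum_list (map degyO ss) = 0" by (simp add: sum_list_eq_0_iff)
  then show "degyO S = 0" using ss(1) degy_bul[of ss] by (simp add: fib_def)
qed

lemma Yfree_phiO:
  assumes a: "Yfree a" and b: "Yfree b"
  shows "Yfree (phiO a b S)"
proof -
  have "Yfree (phiT a b s)" for s
  proof (induction s)
    case (Lf l) then show ?case using a b by (cases l) auto
  next
    case (Nd ts) then show ?case by simp (intro Yfree_prods, auto)
  qed
  moreover have "Yfree (oneser :: 'a pser)" by (simp add: Yfree_def oneser_def degyO_def)
  ultimately show ?thesis by (cases S) (auto simp: phiO_def)
qed

lemma phiO_degy:
  assumes a: "Yfree a" and b: "\<forall>S. b S \<noteq> 0 \<longrightarrow> degyO S = 1"
  shows "phiO a b S T \<noteq> 0 \<Longrightarrow> degyO T = degyO S"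
proof -
  have "phiT a b s T \<noteq> 0 \<Longrightarrow> degyO T = degyT s" for s T
  proof (induction s arbitrary: T)
    case (Lf l) then show ?case using a b by (cases l) (auto simp: Yfree_def)
  next
    case (Nd ts)
    then have "prods (map (phiT a b) ts) T \<noteq> 0" by simp
    then obtain ss where ss: "ss \<in> fib (length ts) T" "\<forall>i<length ts. phiT a b (ts!i) (ss!i) \<noteq> 0"
      using prods_supp by fastforce
    have l: "length ss = length ts" using ss by (simp add: fib_def)
    have "\<forall>i<length ts. degyO (ss!i) = degyT (ts!i)"
      using Nd.IH ss(2) by simp
    then have "map degyO ss = map degyT ts" using l by (simp add: list_eq_iff_nth_eq)
    then show ?case using ss(1) degy_bul[of ss] by (simp add: fib_def)
  qed
  moreover have "oneser T \<noteq> 0 \<Longrightarrow> degyO T = 0" by (simp add: oneser_def degyO_def split: if_splits)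
  ultimately show "phiO a b S T \<noteq> 0 \<Longrightarrow> degyO T = degyO S"
    by (cases S) (auto simp: phiO_def degyO_def)
qed

definition Yv :: "ptree \<Rightarrow> ptree set" where
  "Yv t = {u. degyT u = 1 \<and> allX u = t}"

lemma fin_Yv: "finite (Yv t)"
  unfolding Yv_def by (rule finite_subset[OF _ fin_allX_pre[of t]]) auto

lemma Yv_Nd:
  assumes Y: "\<forall>t\<in>set ts. degyT t = 0"
  shows "Yv (Nd ts) = (\<Union>j\<in>{..<length ts}. (\<lambda>u. Nd (ts[j := u])) ` Yv (ts!j))"
proof
  have mts: "map allX ts = ts" using Y allX_Yfree by (simp add: map_idI)
  show "Yv (Nd ts) \<subseteq> (\<Union>j\<in>{..<length ts}. (\<lambda>u. Nd (ts[j := u])) ` Yv (ts!j))"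
  proof
    fix w assume "w \<in> Yv (Nd ts)"
    then have w: "degyT w = 1" "allX w = Nd ts" by (auto simp: Yv_def)
    then obtain us where us: "w = Nd us" "map allX us = ts" by (cases w) auto
    have "sum_list (map degyT us) = 1" using w us by simp
    then obtain j0 where j0: "j0 < length us" "degyT (us!j0) = 1" "\<forall>l<length us. l \<noteq> j0 \<longrightarrow> degyT (us!l) = 0"
      using sum_list_one[of degyT us] by auto
    have lu: "length us = length ts" using us by (metis length_map)
    have "us = ts[j0 := us!j0]"
    proof (rule nth_equalityI)
      show "length us = length (ts[j0 := us!j0])" using lu by simp
      fix l assume l: "l < length us"
      show "us!l = ts[j0 := us!j0] ! l"
      proof (cases "l = j0")
        case True then show ?thesis using l lu by simp
      next
        case False
        then have "degyT (us!l) = 0" using j0(3) l by simp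
        then have "us!l = allX (us!l)" by (simp add: allX_Yfree)
        also have "\<dots> = ts!l" using us(2) l by (metis nth_map)
        finally show ?thesis using False by simp
      qed
    qed
    moreover have "allX (us!j0) = ts!j0" using us(2) j0(1) by (metis nth_map)
    then have "us!j0 \<in> Yv (ts!j0)" using j0(2) by (simp add: Yv_def)
    moreover have "j0 \<in> {..<length ts}" using j0(1) lu by simp
    ultimately show "w \<in> (\<Union>j\<in>{..<length ts}. (\<lambda>u. Nd (ts[j := u])) ` Yv (ts!j))"
      using us(1) by blast
  qed
  show "(\<Union>j\<in>{..<length ts}. (\<lambda>u. Nd (ts[j := u])) ` Yv (ts!j)) \<subseteq> Yv (Nd ts)"
  proof
    fix w assume "w \<in> (\<Union>j\<in>{..<length ts}. (\<lambda>u. Nd (ts[j := u])) ` Yv (ts!j))"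
    then obtain j u where j: "j < length ts" "u \<in> Yv (ts!j)" "w = Nd (ts[j := u])" by auto
    then have u: "degyT u = 1" "allX u = ts!j" by (auto simp: Yv_def)
    have "allX w = Nd ((map allX ts)[j := allX u])" using j by (simp add: map_update)
    also have "\<dots> = Nd ts" using mts u by simp
    finally have ax: "allX w = Nd ts" .
    have "sum_list (map degyT (ts[j := u])) = 1"
      using j u Y by (intro sum_list_one_conv[of j]) (auto simp: nth_list_update)
    then show "w \<in> Yv (Nd ts)" using ax j by (simp add: Yv_def)
  qed
qed

lemma sum_Yv_Nd:
  assumes Y: "\<forall>t\<in>set ts. degyT t = 0"
  shows "(\<Sum>w\<in>Yv (Nd ts). F w) = (\<Sum>j<length ts. \<Sum>u\<in>Yv (ts!j). F (Nd (ts[j := u])))"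
proof -
  have "(\<Sum>w\<in>Yv (Nd ts). F w) = (\<Sum>j<length ts. \<Sum>w\<in>(\<lambda>u. Nd (ts[j := u])) ` Yv (ts!j). F w)"
    unfolding Yv_Nd[OF Y]
  proof (rule sum.UNION_disjoint)
    show "finite {..<length ts}" by simp
    show "\<forall>j\<in>{..<length ts}. finite ((\<lambda>u. Nd (ts[j := u])) ` Yv (ts!j))" using fin_Yv by auto
    show "\<forall>i\<in>{..<length ts}. \<forall>j\<in>{..<length ts}. i \<noteq> j \<longrightarrow>
      (\<lambda>u. Nd (ts[i := u])) ` Yv (ts!i) \<inter> (\<lambda>u. Nd (ts[j := u])) ` Yv (ts!j) = {}"
    proof (intro ballI impI)
      fix i j assume i: "i \<in> {..<length ts}" and j: "j \<in> {..<length ts}" and ij: "i \<noteq> j"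
      show "(\<lambda>u. Nd (ts[i := u])) ` Yv (ts!i) \<inter> (\<lambda>u. Nd (ts[j := u])) ` Yv (ts!j) = {}"
      proof (rule ccontr)
        assume "(\<lambda>u. Nd (ts[i := u])) ` Yv (ts!i) \<inter> (\<lambda>u. Nd (ts[j := u])) ` Yv (ts!j) \<noteq> {}"
        then obtain u1 u2 where u: "u1 \<in> Yv (ts!i)" "u2 \<in> Yv (ts!j)" "ts[i := u1] = ts[j := u2]" by auto
        then have "ts[i := u1] ! i = ts[j := u2] ! i" by simp
        then have "u1 = ts!i" using i ij by simp
        moreover have "degyT (ts!i) = 0" using Y i by simp
        ultimately show False using u(1) by (simp add: Yv_def)
      qed
    qed
  qed
  also have "\<dots> = (\<Sum>j<length ts. \<Sum>u\<in>Yv (ts!j). F (Nd (ts[j := u])))"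
  proof (rule sum.cong[OF refl])
    fix j assume j: "j \<in> {..<length ts}"
    have "inj_on (\<lambda>u. Nd (ts[j := u])) (Yv (ts!j))"
    proof
      fix u1 u2 assume "Nd (ts[j := u1]) = Nd (ts[j := u2])"
      then have "ts[j := u1] ! j = ts[j := u2] ! j" by simp
      then show "u1 = u2" using j by simp
    qed
    then show "(\<Sum>w\<in>(\<lambda>u. Nd (ts[j := u])) ` Yv (ts!j). F w) = (\<Sum>u\<in>Yv (ts!j). F (Nd (ts[j := u])))"
      by (simp add: sum.reindex)
  qed
  finally show ?thesis .
qed

lemma chain_tree:
  assumes g: "ord1 g" and Yg: "Yfree g"
  shows "degyT s = 0 \<Longrightarrow> dser (phiT g (\<lambda>_. 0) s) T' = (\<Sum>u\<in>Yv s. phiT g (dser g) u T')"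
proof (induction s arbitrary: T')
  case (Lf l)
  then have l: "l = X" by (cases l) auto
  have "Yv (Lf X) = {Lf Y}"
  proof
    show "Yv (Lf X) \<subseteq> {Lf Y}"
    proof
      fix u assume "u \<in> Yv (Lf X)"
      then have "degyT u = 1" "allX u = Lf X" by (auto simp: Yv_def)
      then show "u \<in> {Lf Y}" by (cases u; cases "case u of Lf m \<Rightarrow> m") auto
    qed
  qed (simp add: Yv_def)
  then show ?case using l by simp
next
  case (Nd ts)
  let ?z = "\<lambda>_::ptree option. 0::'a"
  let ?dg = "dser g"
  have Yts: "\<forall>t\<in>set ts. degyT t = 0" using Nd.prems by (simp add: sum_list_eq_0_iff)
  have Yz: "Yfree ?z" by (simp add: Yfree_def)
  have Yf: "\<forall>f\<in>set (map (phiT g ?z) ts). Yfree f"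
  proof
    fix f assume "f \<in> set (map (phiT g ?z) ts)"
    then obtain t where "f = phiT g ?z t" by auto
    moreover have "Yfree (phiO g ?z (Some t))" by (rule Yfree_phiO[OF Yg Yz])
    ultimately show "Yfree f" by (simp add: phiO_def)
  qed
  have "dser (phiT g ?z (Nd ts)) T' =
        (\<Sum>j<length ts. prods ((map (phiT g ?z) ts)[j := dser (phiT g ?z (ts!j))]) T')"
    using dser_prods[OF Yf] by simp
  also have "\<dots> = (\<Sum>j<length ts. prods ((map (phiT g ?z) ts)[j := (\<lambda>T'. \<Sum>u\<in>Yv (ts!j). phiT g ?dg u T')]) T')"
  proof (rule sum.cong[OF refl])
    fix j assume "j \<in> {..<length ts}"
    then have "dser (phiT g ?z (ts!j)) = (\<lambda>T'. \<Sum>u\<in>Yv (ts!j). phiT g ?dg u T')"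
      using Nd.IH Yts by auto
    then show "prods ((map (phiT g ?z) ts)[j := dser (phiT g ?z (ts!j))]) T' =
      prods ((map (phiT g ?z) ts)[j := (\<lambda>T'. \<Sum>u\<in>Yv (ts!j). phiT g ?dg u T')]) T'" by simp
  qed
  also have "\<dots> = (\<Sum>j<length ts. \<Sum>u\<in>Yv (ts!j). prods ((map (phiT g ?z) ts)[j := phiT g ?dg u]) T')"
    by (rule sum.cong[OF refl], rule prods_slot_sum) (auto simp: fin_Yv)
  also have "\<dots> = (\<Sum>j<length ts. \<Sum>u\<in>Yv (ts!j). phiT g ?dg (Nd (ts[j := u])) T')"
  proof (rule sum.cong[OF refl], rule sum.cong[OF refl])
    fix j u assume j: "j \<in> {..<length ts}"
    have e: "map (phiT g ?z) ts = map (phiT g ?dg) ts"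
      using Yts phiT_Yfree by (intro map_cong[OF refl]) blast
    show "prods ((map (phiT g ?z) ts)[j := phiT g ?dg u]) T' = phiT g ?dg (Nd (ts[j := u])) T'"
      by (simp only: e phiT.simps map_update)
  qed
  also have "\<dots> = (\<Sum>w\<in>Yv (Nd ts). phiT g ?dg w T')"
    by (rule sum_Yv_Nd[OF Yts, symmetric])
  finally show ?case .
qed

lemma chain:
  assumes f: "fin f" and Yf: "Yfree f" and g: "ord1 g" and Yg: "Yfree g"
  shows "dser (phi g (\<lambda>_. 0) f) = phi g (dser g) (dser f)"
proof (rule ext)
  fix T'
  let ?z = "\<lambda>_::ptree option. 0::'a"
  let ?dg = "dser g"
  have dgY: "\<forall>S. ?dg S \<noteq> 0 \<longrightarrow> degyO S = 1" using dser_supp by blast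
  show "dser (phi g ?z f) T' = phi g ?dg (dser f) T'"
  proof (cases "degyO T' = 1")
    case False
    have "dser (phi g ?z f) T' = 0" using False dser_supp by blast
    moreover have "phi g ?dg (dser f) T' = 0"
    proof (rule ccontr)
      assume "phi g ?dg (dser f) T' \<noteq> 0"
      then obtain S where "dser f S \<noteq> 0" "phiO g ?dg S T' \<noteq> 0" using phi_nz by blast
      then have "degyO S = 1" "degyO T' = degyO S" using dser_supp phiO_degy[OF Yg dgY] by blast+
      then show False using False by simp
    qed
    ultimately show ?thesis by simp
  next
    case True
    then obtain T where T: "T' = Some T" "degyT T = 1" by (cases T') (auto simp: degyO_def)
    have dxa: "degx (Some (allX T)) = degx T' + 1"
      using T allX_props[of T] degT_split[of T] by (simp add: degx_def)
    define AS where "AS = {S. f S \<noteq> 0 \<and> degx S \<le> degx T' + 1} - {None}"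
    have fAS: "finite AS" unfolding AS_def using fin_le[OF f] by auto
    have ASs: "\<And>S. S \<in> AS \<Longrightarrow> S = Some (the S) \<and> degyT (the S) = 0"
      using Yf by (auto simp: AS_def Yfree_def degyO_def)
    have "dser (phi g ?z f) T' = phi g ?z f (Some (allX T))" using T by (simp add: dser_def)
    also have "\<dots> = (\<Sum>S\<in>insert None AS. f S * phiO g ?z S (Some (allX T)))"
    proof (rule phi_eq_sum[OF g])
      show "finite (insert None AS)" using fAS by simp
      show "{S. f S \<noteq> 0 \<and> degx S \<le> degx (Some (allX T))} \<subseteq> insert None AS"
        using dxa by (auto simp: AS_def)
    qed
    also have "\<dots> = (\<Sum>S\<in>AS. f S * phiO g ?z S (Some (allX T)))"
    proof -
      have "None \<notin> AS" by (simp add: AS_def)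
      moreover have "phiO g ?z None (Some (allX T)) = 0" by (simp add: phiO_def oneser_def)
      ultimately show ?thesis using fAS by simp
    qed
    also have "\<dots> = (\<Sum>S\<in>AS. f S * (\<Sum>u\<in>Yv (the S). phiT g ?dg u T'))"
    proof (rule sum.cong[OF refl])
      fix S assume S: "S \<in> AS"
      obtain s where s: "S = Some s" "degyT s = 0" using ASs[OF S] by metis
      have "phiO g ?z S (Some (allX T)) = dser (phiT g ?z (the S)) T'"
        using s T by (simp add: phiO_def dser_def)
      also have "\<dots> = (\<Sum>u\<in>Yv (the S). phiT g ?dg u T')"
        using chain_tree[OF g Yg] ASs[OF S] by blast
      finally show "f S * phiO g ?z S (Some (allX T)) = f S * (\<Sum>u\<in>Yv (the S). phiT g ?dg u T')" by simp
    qed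
    also have "\<dots> = (\<Sum>S\<in>AS. \<Sum>S'\<in>Some ` Yv (the S). dser f S' * phiO g ?dg S' T')"
    proof (rule sum.cong[OF refl])
      fix S assume S: "S \<in> AS"
      have "(\<Sum>S'\<in>Some ` Yv (the S). dser f S' * phiO g ?dg S' T') = (\<Sum>u\<in>Yv (the S). dser f (Some u) * phiT g ?dg u T')"
        by (simp add: sum.reindex phiO_def)
      also have "\<dots> = (\<Sum>u\<in>Yv (the S). f S * phiT g ?dg u T')"
        using ASs[OF S] by (intro sum.cong[OF refl]) (auto simp: Yv_def dser_def)
      finally show "f S * (\<Sum>u\<in>Yv (the S). phiT g ?dg u T') = (\<Sum>S'\<in>Some ` Yv (the S). dser f S' * phiO g ?dg S' T')"
        by (simp add: sum_distrib_left)
    qed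
    also have "\<dots> = (\<Sum>S'\<in>(\<Union>S\<in>AS. Some ` Yv (the S)). dser f S' * phiO g ?dg S' T')"
    proof (rule sum.UNION_disjoint[symmetric])
      show "finite AS" by (rule fAS)
      show "\<forall>S\<in>AS. finite (Some ` Yv (the S))" using fin_Yv by auto
      show "\<forall>S1\<in>AS. \<forall>S2\<in>AS. S1 \<noteq> S2 \<longrightarrow> Some ` Yv (the S1) \<inter> Some ` Yv (the S2) = {}"
      proof (intro ballI impI)
        fix S1 S2 assume S1: "S1 \<in> AS" and S2: "S2 \<in> AS" and ne: "S1 \<noteq> S2"
        show "Some ` Yv (the S1) \<inter> Some ` Yv (the S2) = {}"
        proof (rule ccontr)
          assume "Some ` Yv (the S1) \<inter> Some ` Yv (the S2) \<noteq> {}"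
          then obtain u where "u \<in> Yv (the S1)" "u \<in> Yv (the S2)" by auto
          then have "the S1 = the S2" by (simp add: Yv_def)
          then show False using ASs[OF S1] ASs[OF S2] ne by metis
        qed
      qed
    qed
    also have "\<dots> = phi g ?dg (dser f) T'"
    proof (rule phi_eq_sum[OF g, symmetric])
      show "finite (\<Union>S\<in>AS. Some ` Yv (the S))" using fAS fin_Yv by auto
      show "{S. dser f S \<noteq> 0 \<and> degx S \<le> degx T'} \<subseteq> (\<Union>S\<in>AS. Some ` Yv (the S))"
      proof
        fix S' assume S': "S' \<in> {S. dser f S \<noteq> 0 \<and> degx S \<le> degx T'}"
        then obtain u where u: "S' = Some u" "degyT u = 1" "f (Some (allX u)) \<noteq> 0"
          by (cases S') (auto simp: dser_def split: if_splits)
        have "degx (Some (allX u)) = degx S' + 1"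
          using u allX_props[of u] degT_split[of u] by (simp add: degx_def)
        then have "Some (allX u) \<in> AS" using S' u by (auto simp: AS_def)
        moreover have "u \<in> Yv (the (Some (allX u)))" using u by (simp add: Yv_def)
        ultimately show "S' \<in> (\<Union>S\<in>AS. Some ` Yv (the S))" using u by blast
      qed
    qed
    finally show ?thesis .
  qed
qed


section \<open>The exponential\<close>

definition Bset :: "nat \<Rightarrow> ptree list \<Rightarrow> ptree option list set" where
  "Bset k L = {ss. length ss = k \<and> fl ss = L}"

lemma Bset_Suc: "Bset (Suc k) L = (\<lambda>ss. None # ss) ` Bset k L \<union>
    (case L of [] \<Rightarrow> {} | t # L' \<Rightarrow> (\<lambda>ss. Some t # ss) ` Bset k L')"
proof (intro set_eqI iffI)
  fix ss assume "ss \<in> Bset (Suc k) L"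
  then obtain s r where ss: "ss = s # r" "length r = k" "fl ss = L" by (auto simp: Bset_def length_Suc_conv)
  show "ss \<in> (\<lambda>ss. None # ss) ` Bset k L \<union> (case L of [] \<Rightarrow> {} | t # L' \<Rightarrow> (\<lambda>ss. Some t # ss) ` Bset k L')"
  proof (cases s)
    case None then show ?thesis using ss by (auto simp: Bset_def)
  next
    case (Some t) then show ?thesis using ss by (auto simp: Bset_def)
  qed
next
  fix ss assume "ss \<in> (\<lambda>ss. None # ss) ` Bset k L \<union> (case L of [] \<Rightarrow> {} | t # L' \<Rightarrow> (\<lambda>ss. Some t # ss) ` Bset k L')"
  then show "ss \<in> Bset (Suc k) L" by (cases L) (auto simp: Bset_def)
qed

lemma Bset_card: "finite (Bset k L) \<and> card (Bset k L) = k choose (length L)"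
proof (induction k arbitrary: L)
  case 0
  have "Bset 0 L = (if L = [] then {[]} else {})" by (auto simp: Bset_def)
  then show ?case by simp
next
  case (Suc k)
  show ?case
  proof (cases L)
    case Nil
    have "Bset (Suc k) L = (\<lambda>ss. None # ss) ` Bset k L" using Bset_Suc[of k L] Nil by simp
    then show ?thesis using Suc.IH[of L] Nil by (simp add: card_image)
  next
    case (Cons t L')
    have e: "Bset (Suc k) L = (\<lambda>ss. None # ss) ` Bset k L \<union> (\<lambda>ss. Some t # ss) ` Bset k L'"
      using Bset_Suc[of k L] Cons by simp
    have d: "(\<lambda>ss. None # ss) ` Bset k L \<inter> (\<lambda>ss. Some t # ss) ` Bset k L' = {}" by auto
    have "card (Bset (Suc k) L) = card ((\<lambda>ss. None # ss) ` Bset k L) + card ((\<lambda>ss. Some t # ss) ` Bset k L')"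
      unfolding e using Suc.IH[of L] Suc.IH[of L'] d by (intro card_Un_disjoint) auto
    also have "\<dots> = (k choose length L) + (k choose length L')"
      using Suc.IH[of L] Suc.IH[of L'] by (simp add: card_image)
    also have "\<dots> = Suc k choose length L" using Cons by simp
    finally show ?thesis using e Suc.IH[of L] Suc.IH[of L'] by simp
  qed
qed

lemma prod_list_fl:
  assumes "E None = 1"
  shows "prod_list (map E ss) = prod_list (map (\<lambda>t. E (Some t)) (fl ss))"
  by (induction ss) (auto simp: assms split: option.splits)

lemma prod_list_map_nth: "prod_list (map f xs) = (\<Prod>i<length xs. f (xs!i))"
proof (induction xs)
  case Nil then show ?case by simp
next
  case (Cons x xs) then show ?case by (simp only: list.map prod_list.Cons length_Cons prod.lessThan_Suc_shift nth_Cons_0 nth_Cons_Suc)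
qed

lemma prod_rep_nth:
  assumes "length ss = k"
  shows "(\<Prod>i<length (replicate k E). (replicate k E ! i) (ss ! i)) = prod_list (map E ss)"
proof -
  have "(\<Prod>i<length (replicate k E). (replicate k E ! i) (ss ! i)) = (\<Prod>i<length ss. E (ss ! i))"
    using assms by (intro prod.cong) auto
  also have "\<dots> = prod_list (map E ss)"
    by (simp add: prod_list_map_nth)
  finally show ?thesis .
qed

lemma fib_Some_split:
  "fib k (Some T) = Bset k [T] \<union> (case T of Lf _ \<Rightarrow> {} | Nd ts \<Rightarrow> if 2 \<le> length ts then Bset k ts else {})"
proof (intro set_eqI iffI)
  fix ss assume "ss \<in> fib k (Some T)"
  then have "length ss = k" "bul ss = Some T" by (auto simp: fib_def)
  then show "ss \<in> Bset k [T] \<union> (case T of Lf _ \<Rightarrow> {} | Nd ts \<Rightarrow> if 2 \<le> length ts then Bset k ts else {})"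
    using bul_Some[of ss T] by (auto simp: Bset_def)
next
  fix ss assume a: "ss \<in> Bset k [T] \<union> (case T of Lf _ \<Rightarrow> {} | Nd ts \<Rightarrow> if 2 \<le> length ts then Bset k ts else {})"
  show "ss \<in> fib k (Some T)"
  proof (cases "ss \<in> Bset k [T]")
    case True then show ?thesis using fl_single by (auto simp: Bset_def fib_def)
  next
    case False
    then obtain ts where "T = Nd ts" "2 \<le> length ts" "ss \<in> Bset k ts" using a
      by (cases T) (auto split: if_splits)
    then show ?thesis using fl_multi[of ss ts] by (auto simp: Bset_def fib_def)
  qed
qed

lemma prods_rep_Some:
  fixes E :: "('a::comm_ring_1) pser"
  assumes E1: "E None = 1"
  shows "prods (replicate k E) (Some T) = of_nat k * E (Some T) +
     (case T of Lf _ \<Rightarrow> 0 | Nd ts \<Rightarrow> if 2 \<le> length ts then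
        of_nat (card (Bset k ts)) * prod_list (map (\<lambda>t. E (Some t)) ts) else 0)"
proof -
  let ?B = "(case T of Lf _ \<Rightarrow> {} | Nd ts \<Rightarrow> if 2 \<le> length ts then Bset k ts else {})"
  have fA: "finite (Bset k [T])" using Bset_card by blast
  have fB: "finite ?B" using Bset_card by (auto split: ptree.splits)
  have dis: "Bset k [T] \<inter> ?B = {}"
  proof (cases T)
    case (Nd ts)
    have "ts \<noteq> [T]"
    proof
      assume a: "ts = [T]"
      have "size (Nd ts) = size (Nd [Nd ts])" using arg_cong[OF a, of "\<lambda>l. size (Nd l)"] Nd by simp
      then show False by simp
    qed
    then show ?thesis using Nd by (auto simp: Bset_def)
  qed simp
  have "prods (replicate k E) (Some T) = (\<Sum>ss\<in>fib k (Some T). prod_list (map E ss))"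
    unfolding prods_i by (intro sum.cong) (auto simp: fib_def prod_list_map_nth)
  also have "\<dots> = (\<Sum>ss\<in>Bset k [T]. prod_list (map E ss)) + (\<Sum>ss\<in>?B. prod_list (map E ss))"
    unfolding fib_Some_split by (rule sum.union_disjoint[OF fA fB dis])
  also have "(\<Sum>ss\<in>Bset k [T]. prod_list (map E ss)) = of_nat k * E (Some T)"
  proof -
    have "(\<Sum>ss\<in>Bset k [T]. prod_list (map E ss)) = (\<Sum>ss\<in>Bset k [T]. E (Some T))"
      by (intro sum.cong) (auto simp: prod_list_fl[of E, OF E1] Bset_def)
    also have "\<dots> = of_nat k * E (Some T)" using Bset_card[of k "[T]"] by simp
    finally show ?thesis .
  qed
  also have "(\<Sum>ss\<in>?B. prod_list (map E ss)) = (case T of Lf _ \<Rightarrow> 0 | Nd ts \<Rightarrow> if 2 \<le> length ts then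
        of_nat (card (Bset k ts)) * prod_list (map (\<lambda>t. E (Some t)) ts) else 0)"
  proof (cases T)
    case (Nd ts)
    have "(\<Sum>ss\<in>Bset k ts. prod_list (map E ss)) = (\<Sum>ss\<in>Bset k ts. prod_list (map (\<lambda>t. E (Some t)) ts))"
      by (intro sum.cong) (auto simp: prod_list_fl[of E, OF E1] Bset_def)
    then show ?thesis using Nd by simp
  qed simp
  finally show ?thesis .
qed

lemma fib_None: "fib k None = {replicate k None}"
proof (intro set_eqI iffI)
  fix ss assume "ss \<in> fib k None"
  then have "length ss = k" "\<forall>s\<in>set ss. s = None" by (auto simp: fib_def bul_None fl_Nil_iff)
  then show "ss \<in> {replicate k None}" using replicate_length_same[of ss None] by auto
next
  fix ss :: "ptree option list" assume "ss \<in> {replicate k None}"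
  then show "ss \<in> fib k None" by (simp add: fib_def bul_None fl_Nil_iff)
qed

lemma prods_rep_None:
  fixes E :: "('a::comm_ring_1) pser"
  assumes E1: "E None = 1"
  shows "prods (replicate k E) None = 1"
  unfolding prods_i fib_None by (simp add: E1)

lemma sum_hpart:
  fixes E :: "('a::comm_ring_1) pser"
  shows "(\<Sum>ns \<in> {ns. length ns = k \<and> sum_list ns = n}. prods (map (\<lambda>i. hpart i E) ns) S) =
         (if deg S = n then prods (replicate k E) S else 0)"
proof -
  let ?I = "{ns. length ns = k \<and> sum_list ns = n}"
  have fI: "finite ?I"
  proof (rule finite_subset[OF _ finite_lists_length_eq[of "{0..n}" k]])
    show "?I \<subseteq> {xs. set xs \<subseteq> {0..n} \<and> length xs = k}"
      using member_le_sum_list[of _ _ "\<lambda>x. x"] by fastforce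
  qed simp
  have "(\<Sum>ns\<in>?I. prods (map (\<lambda>i. hpart i E) ns) S) =
        (\<Sum>ns\<in>?I. \<Sum>ss\<in>fib k S. \<Prod>j<k. (if deg (ss!j) = ns!j then E (ss!j) else 0))"
    unfolding prods_i by (intro sum.cong refl prod.cong) (auto simp: hpart_def)
  also have "\<dots> = (\<Sum>ss\<in>fib k S. \<Sum>ns\<in>?I. \<Prod>j<k. (if deg (ss!j) = ns!j then E (ss!j) else 0))"
    by (rule sum.swap)
  also have "\<dots> = (\<Sum>ss\<in>fib k S. if deg S = n then prod_list (map E ss) else 0)"
  proof (rule sum.cong[OF refl])
    fix ss assume ss: "ss \<in> fib k S"
    then have l: "length ss = k" and b: "bul ss = S" by (auto simp: fib_def)
    have "(\<Sum>ns\<in>?I. \<Prod>j<k. (if deg (ss!j) = ns!j then E (ss!j) else 0)) =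
          (\<Sum>ns\<in>?I. if ns = map deg ss then prod_list (map E ss) else 0)"
    proof (rule sum.cong[OF refl])
      fix ns assume "ns \<in> ?I"
      then have li: "length ns = k" by simp
      show "(\<Prod>j<k. (if deg (ss!j) = ns!j then E (ss!j) else 0)) =
            (if ns = map deg ss then prod_list (map E ss) else 0)"
      proof (cases "ns = map deg ss")
        case True
        then have "(\<Prod>j<k. (if deg (ss!j) = ns!j then E (ss!j) else 0)) = (\<Prod>j<length ss. E (ss!j))"
          using l by (intro prod.cong) auto
        then show ?thesis using True by (simp add: prod_list_map_nth)
      next
        case False
        then obtain j where j: "j < k" "ns!j \<noteq> deg (ss!j)" using l li by (auto simp: list_eq_iff_nth_eq)
        have j2: "deg (ss!j) \<noteq> ns!j" using j(2) by simp
        have "(\<Prod>j<k. (if deg (ss!j) = ns!j then E (ss!j) else 0)) = 0"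
          by (rule prod_zero) (use j j2 in \<open>auto intro!: bexI[of _ j]\<close>)
        then show ?thesis using False by simp
      qed
    qed
    also have "\<dots> = (if map deg ss \<in> ?I then prod_list (map E ss) else 0)"
      using fI by (simp add: sum.delta')
    also have "(map deg ss \<in> ?I) = (deg S = n)" using l b deg_bul[of ss] by auto
    finally show "(\<Sum>ns\<in>?I. \<Prod>j<k. (if deg (ss!j) = ns!j then E (ss!j) else 0)) =
       (if deg S = n then prod_list (map E ss) else 0)" .
  qed
  also have "\<dots> = (if deg S = n then prods (replicate k E) S else 0)"
    unfolding prods_i by (auto intro!: sum.cong simp: fib_def prod_list_map_nth)
  finally show ?thesis .
qed


fun Ef :: "nat \<Rightarrow> ptree \<Rightarrow> 'a::field_char_0" where
  "Ef k (Lf l) = (if l = X then 1 else 0)"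
| "Ef k (Nd ts) = (if 2 \<le> length ts \<and> 2 \<le> degT (Nd ts) then
     of_nat (card (Bset k ts)) * prod_list (map (Ef k) ts) / (of_nat (k ^ degT (Nd ts)) - of_nat k) else 0)"

definition Eser :: "nat \<Rightarrow> ('a::field_char_0) pser" where
  "Eser k = (\<lambda>S. case S of None \<Rightarrow> 1 | Some T \<Rightarrow> Ef k T)"

lemma Ef_supp: "Ef k t \<noteq> (0::'a::field_char_0) \<Longrightarrow> wfT t \<and> degyT t = 0 \<and> 1 \<le> degT t"
proof (induction t)
  case (Lf l) then show ?case by (cases l) auto
next
  case (Nd ts)
  then have c: "2 \<le> length ts" "2 \<le> degT (Nd ts)" and p: "prod_list (map (Ef k) ts) \<noteq> (0::'a)"
    by (auto split: if_splits)
  have "\<forall>t\<in>set ts. Ef k t \<noteq> (0::'a)" using p by (auto simp: prod_list_zero_iff)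
  then have "\<forall>t\<in>set ts. wfT t \<and> degyT t = 0" using Nd.IH by blast
  then show ?case using c by (simp add: sum_list_eq_0_iff)
qed

lemma suppx_Eser: "suppx (Eser k :: ('a::field_char_0) pser)"
  unfolding suppx_def
proof (intro allI impI)
  fix S assume "Eser k S \<noteq> (0::'a)"
  then show "okx S" using Ef_supp[of k] by (cases S) (auto simp: Eser_def okx_def)
qed

lemma okx_degT: "okx (Some t) \<Longrightarrow> degT t = degxT t"
  using degT_split[of t] by (simp add: okx_def)

lemma suppx_fin_sets:
  assumes "suppx f"
  shows "{S. f S \<noteq> 0 \<and> degx S = n} \<subseteq> insert None (Some ` {t. wfT t \<and> degT t = n})"
proof
  fix S assume S: "S \<in> {S. f S \<noteq> 0 \<and> degx S = n}"
  then have "okx S" using assms by (simp add: suppx_def)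
  then show "S \<in> insert None (Some ` {t. wfT t \<and> degT t = n})"
    using S okx_degT by (cases S) (auto simp: okx_def degx_def)
qed

lemma suppx_fin: "suppx f \<Longrightarrow> fin f"
proof (unfold fin_def, intro allI)
  fix n assume "suppx f"
  show "finite {S. f S \<noteq> 0 \<and> degx S = n}"
    by (rule finite_subset[OF suppx_fin_sets[OF \<open>suppx f\<close>]]) (simp add: finite_wf)
qed

lemma suppx_serx: "suppx f \<Longrightarrow> f \<in> serx"
  unfolding serx_def serxy_def using suppx_fin[unfolded fin_def]
  by (auto simp: suppx_def okx_def)

lemma wf_Nd_deg2: "wfT (Nd ts) \<Longrightarrow> 2 \<le> degT (Nd ts)"
  using sum_list_ge_length[of ts degT] wf_degT by auto

lemma pow_gt_k: "2 \<le> (k::nat) \<Longrightarrow> 2 \<le> d \<Longrightarrow> k < k ^ d"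
proof -
  assume k: "2 \<le> k" and d: "2 \<le> d"
  have "k * 1 < k * k" using k by (intro mult_strict_left_mono) auto
  then have "k < k * k" by simp
  also have "k * k = k ^ 2" by (simp add: power2_eq_square)
  also have "\<dots> \<le> k ^ d" using k d by (intro power_increasing) auto
  finally show ?thesis .
qed

lemma Ef_zero_deg0: "degT t = 0 \<Longrightarrow> Ef k t = (0::'a::field_char_0)"
  using Ef_supp[of k t] by auto

lemma prods_rep_Eser:
  assumes k: "2 \<le> k"
  shows "prods (replicate k (Eser k)) S = of_nat (k ^ deg S) * (Eser k S :: 'a::field_char_0)"
proof (cases S)
  case None then show ?thesis using prods_rep_None[of "Eser k"] by (simp add: Eser_def deg_def)
next
  case (Some T)
  have E1: "Eser k None = (1::'a)" by (simp add: Eser_def)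
  note pr = prods_rep_Some[of "Eser k" k T, OF E1]
  show ?thesis
  proof (cases T)
    case (Lf l) then show ?thesis using pr Some by (simp add: deg_def)
  next
    case (Nd ts)
    let ?d = "degT (Nd ts)"
    let ?c = "of_nat (card (Bset k ts)) :: 'a"
    let ?P = "prod_list (map (Ef k) ts) :: 'a"
    have mE: "map (\<lambda>t. Eser k (Some t)) ts = map (Ef k) ts" by (simp add: Eser_def)
    have pr2: "prods (replicate k (Eser k)) S = of_nat k * Ef k (Nd ts) + (if 2 \<le> length ts then ?c * ?P else 0)"
      using pr Some Nd mE by (simp add: Eser_def)
    show ?thesis
    proof (cases "2 \<le> length ts \<and> 2 \<le> ?d")
      case True
      have ne: "(of_nat (k ^ ?d) - of_nat k :: 'a) \<noteq> 0" using pow_gt_k[OF k, of ?d] True by simp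
      have Ev: "Ef k (Nd ts) = ?c * ?P / (of_nat (k ^ ?d) - of_nat k)" using True by simp
      have "of_nat k * Ef k (Nd ts) + ?c * ?P = of_nat (k ^ ?d) * Ef k (Nd ts)"
        using ne unfolding Ev by (simp add: field_simps)
      then show ?thesis using pr2 True Some Nd by (simp add: Eser_def deg_def)
    next
      case False
      then have E0: "Ef k (Nd ts) = (0::'a)" by auto
      have "2 \<le> length ts \<Longrightarrow> ?P = 0"
      proof -
        assume l: "2 \<le> length ts"
        with False have "?d < 2" by simp
        have "\<not> (\<forall>t\<in>set ts. 1 \<le> degT t)"
        proof
          assume "\<forall>t\<in>set ts. 1 \<le> degT t"
          then have "length ts \<le> sum_list (map degT ts)" using sum_list_ge_length[of ts degT] by blast
          then show False using l \<open>?d < 2\<close> by simp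
        qed
        then obtain t where "t \<in> set ts" "degT t = 0" by auto
        then show "?P = 0" using Ef_zero_deg0[of t k] by (auto simp: prod_list_zero_iff)
      qed
      then show ?thesis using pr2 E0 Some Nd by (simp add: Eser_def deg_def)
    qed
  qed
qed

definition Espec :: "nat \<Rightarrow> ('a::field_char_0) pser \<Rightarrow> bool" where
  "Espec k E = (E \<in> serx \<and> hpart 0 E = oneser \<and> hpart 1 E = xser \<and>
     (\<forall>n. (\<lambda>S. of_nat (k ^ n) * hpart n E S) =
          (\<lambda>S. \<Sum>is \<in> {is. length is = k \<and> sum_list is = n}.
                  prods (map (\<lambda>i. hpart i E) is) S)))"

lemma Espec_rec:
  assumes "Espec k E"
  shows "of_nat (k ^ deg S) * E S = prods (replicate k E) S"
proof -
  have "(\<lambda>S. of_nat (k ^ deg S) * hpart (deg S) E S) S =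
    (\<lambda>S. \<Sum>ns \<in> {ns. length ns = k \<and> sum_list ns = deg S}. prods (map (\<lambda>i. hpart i E) ns) S) S"
    using assms unfolding Espec_def by metis
  then show ?thesis unfolding sum_hpart by (simp add: hpart_def)
qed

lemma Eser_Espec:
  assumes k: "2 \<le> k"
  shows "Espec k (Eser k :: ('a::field_char_0) pser)"
  unfolding Espec_def
proof (intro conjI allI)
  show "Eser k \<in> serx" by (rule suppx_serx[OF suppx_Eser])
  show "hpart 0 (Eser k) = (oneser :: 'a pser)"
  proof (rule ext)
    fix S show "hpart 0 (Eser k) S = (oneser S :: 'a)"
      using Ef_zero_deg0[of _ k] by (cases S) (auto simp: hpart_def oneser_def Eser_def deg_def)
  qed
  show "hpart 1 (Eser k) = (xser :: 'a pser)"
  proof (rule ext)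
    fix S
    show "hpart 1 (Eser k) S = (xser S :: 'a)"
    proof (cases S)
      case None then show ?thesis by (simp add: hpart_def xser_def deg_def)
    next
      case (Some t)
      show ?thesis
      proof (cases "degT t = 1")
        case True
        show ?thesis
        proof (cases t)
          case (Lf l) then show ?thesis using Some by (cases l) (auto simp: hpart_def xser_def Eser_def deg_def)
        next
          case (Nd ts)
          then have "Ef k t = (0::'a)" using Ef_supp[of k t] wf_Nd_deg2[of ts] True by auto
          then show ?thesis using Some Nd by (simp add: hpart_def xser_def Eser_def deg_def)
        qed
      next
        case False then show ?thesis using Some by (auto simp: hpart_def xser_def deg_def)
      qed
    qed
  qed
  fix n
  show "(\<lambda>S. of_nat (k ^ n) * hpart n (Eser k) S) =
        (\<lambda>S. \<Sum>is\<in>{is. length is = k \<and> sum_list is = n}. prods (map (\<lambda>i. hpart i (Eser k)) is) S)"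
    by (rule ext, subst sum_hpart) (simp add: hpart_def prods_rep_Eser[OF k])
qed

lemma Espec_unique:
  assumes k: "2 \<le> k" and E: "Espec k (E :: ('a::field_char_0) pser)"
  shows "E = Eser k"
proof -
  have h0: "hpart 0 E = oneser" and h1: "hpart 1 E = xser" using E by (auto simp: Espec_def)
  have E1: "E None = 1" using fun_cong[OF h0, of None] by (simp add: hpart_def deg_def oneser_def)
  have "E (Some t) = Ef k t" for t
  proof (induction t)
    case (Lf l)
    have "hpart 1 E (Some (Lf l)) = xser (Some (Lf l))" using h1 by simp
    then show ?case by (cases l) (auto simp: hpart_def deg_def xser_def)
  next
    case (Nd ts)
    let ?d = "degT (Nd ts)"
    show ?case
    proof (cases "?d < 2")
      case True
      then have "?d = 0 \<or> ?d = 1" by linarith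
      then have "E (Some (Nd ts)) = 0"
      proof
        assume "?d = 0"
        then show ?thesis using fun_cong[OF h0, of "Some (Nd ts)"] by (simp add: hpart_def deg_def oneser_def)
      next
        assume "?d = 1"
        then show ?thesis using fun_cong[OF h1, of "Some (Nd ts)"] by (simp add: hpart_def deg_def xser_def)
      qed
      then show ?thesis using True by simp
    next
      case False
      let ?c = "of_nat (card (Bset k ts)) :: 'a"
      have mE: "map (\<lambda>t. E (Some t)) ts = map (Ef k) ts" using Nd.IH by simp
      have pm: "prod_list (map (\<lambda>t. E (Some t)) ts) = prod_list (map (Ef k) ts)" by (simp only: mE)
      have "of_nat (k ^ ?d) * E (Some (Nd ts)) = prods (replicate k E) (Some (Nd ts))"
        using Espec_rec[OF E, of "Some (Nd ts)"] by (simp add: deg_def)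
      also have "\<dots> = of_nat k * E (Some (Nd ts)) + (if 2 \<le> length ts then ?c * prod_list (map (Ef k) ts) else 0)"
        using prods_rep_Some[of E k "Nd ts", OF E1] pm by simp
      finally have eq: "(of_nat (k ^ ?d) - of_nat k) * E (Some (Nd ts)) = (if 2 \<le> length ts then ?c * prod_list (map (Ef k) ts) else 0)"
        by (simp add: algebra_simps)
      have ne: "(of_nat (k ^ ?d) - of_nat k :: 'a) \<noteq> 0" using pow_gt_k[OF k, of ?d] False by simp
      have "E (Some (Nd ts)) = (if 2 \<le> length ts then ?c * prod_list (map (Ef k) ts) else 0) / (of_nat (k ^ ?d) - of_nat k)"
        using eq ne by (simp add: field_simps)
      then show ?thesis using False by auto
    qed
  qed
  then show ?thesis using E1 by (intro ext) (auto simp: Eser_def split: option.splits)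
qed

lemma Expk_eq:
  assumes k: "2 \<le> k"
  shows "Expk k = (Eser k :: ('a::field_char_0) pser)"
proof -
  have "Expk k = (THE E. Espec k E)" unfolding Expk_def Espec_def by simp
  also have "\<dots> = Eser k"
    by (rule the_equality[of "Espec k" "Eser k", OF Eser_Espec[OF k] Espec_unique[OF k]])
  finally show ?thesis .
qed


section \<open>Derivative of the exponential\<close>

definition Dl :: "('a::comm_ring_1) pser \<Rightarrow> 'a pser" where
  "Dl f = phi xser oneser (dser f)"

lemma suppx_xser: "suppx xser" by (simp add: suppx_def xser_def okx_def)
lemma suppx_oneser: "suppx oneser" by (simp add: suppx_def oneser_def okx_def)

lemma suppx_Yfree: "suppx f \<Longrightarrow> Yfree f"
  by (auto simp: suppx_def Yfree_def okx_def degyO_def split: option.splits)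

lemma Dl_prods:
  assumes fs: "\<forall>f\<in>set fs. fin f \<and> suppx f"
  shows "Dl (prods fs) T = (\<Sum>j<length fs. prods (fs[j := Dl (fs!j)]) T)"
proof -
  have Y: "\<forall>f\<in>set fs. Yfree f" using fs suppx_Yfree by blast
  have fd: "\<And>j. j < length fs \<Longrightarrow> \<forall>f\<in>set (fs[j := dser (fs!j)]). fin f"
  proof -
    fix j assume j: "j < length fs"
    show "\<forall>f\<in>set (fs[j := dser (fs!j)]). fin f"
    proof
      fix f assume "f \<in> set (fs[j := dser (fs!j)])"
      then have "f \<in> set fs \<or> f = dser (fs!j)" using set_update_subset_insert by fastforce
      moreover have "fin (dser (fs!j))" using dser_fin fs nth_mem[OF j] by blast
      ultimately show "fin f" using fs by auto
    qed
  qed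
  have id: "map (phi xser oneser) fs = fs"
    using fs phi_xser_id by (intro map_idI) blast
  have "Dl (prods fs) T = phi xser oneser (\<lambda>S. \<Sum>j<length fs. prods (fs[j := dser (fs!j)]) S) T"
    unfolding Dl_def using dser_prods[OF Y] by metis
  also have "\<dots> = (\<Sum>j<length fs. phi xser oneser (prods (fs[j := dser (fs!j)])) T)"
  proof (rule phi_sum[OF ord1_xser])
    show "finite {..<length fs}" by simp
    fix j assume "j \<in> {..<length fs}"
    then show "fin (prods (fs[j := dser (fs!j)]))" by (intro prods_fin fd) simp
  qed
  also have "\<dots> = (\<Sum>j<length fs. prods (map (phi xser oneser) (fs[j := dser (fs!j)])) T)"
    by (rule sum.cong[OF refl], rule phi_prods[OF ord1_xser fin_oneser], rule fd) simp
  also have "\<dots> = (\<Sum>j<length fs. prods (fs[j := Dl (fs!j)]) T)"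
    by (simp add: map_update id Dl_def)
  finally show ?thesis .
qed

lemma phiO_x1_deg:
  "phiO xser oneser S T \<noteq> (0::'a::comm_ring_1) \<Longrightarrow> deg T + degyO S = deg S"
proof -
  have "phiT xser oneser s T \<noteq> (0::'a) \<Longrightarrow> deg T + degyT s = degT s" for s T
  proof (induction s arbitrary: T)
    case (Lf l) then show ?case by (cases l) (auto simp: xser_def oneser_def deg_def split: if_splits)
  next
    case (Nd ts)
    then have "prods (map (phiT xser oneser) ts) T \<noteq> (0::'a)" by simp
    then obtain ss where ss: "ss \<in> fib (length ts) T" "\<forall>i<length ts. phiT xser oneser (ts!i) (ss!i) \<noteq> (0::'a)"
      using prods_supp by fastforce
    have l: "length ss = length ts" using ss by (simp add: fib_def)
    have e: "\<And>i. i < length ts \<Longrightarrow> deg (ss!i) + degyT (ts!i) = degT (ts!i)" using Nd.IH ss(2) by simp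
    have "(\<Sum>i<length ts. deg (ss!i) + degyT (ts!i)) = (\<Sum>i<length ts. degT (ts!i))"
      by (rule sum.cong) (auto simp: e)
    then have "sum_list (map deg ss) + sum_list (map degyT ts) = sum_list (map degT ts)"
      using l by (simp add: sum_list_map_nth sum.distrib)
    then show ?case using ss(1) deg_bul[of ss] by (simp add: fib_def)
  qed
  moreover have "oneser T \<noteq> (0::'a) \<Longrightarrow> deg T = 0" by (simp add: oneser_def deg_def split: if_splits)
  ultimately show "phiO xser oneser S T \<noteq> (0::'a) \<Longrightarrow> deg T + degyO S = deg S"
    by (cases S) (auto simp: phiO_def degyO_def deg_def)
qed

lemma deg_allX: "deg (Some (allX t)) = deg (Some t)"
  by (simp add: deg_def allX_props)

lemma dser_scale: "dser (\<lambda>S. c ^ deg S * E S) S = c ^ deg S * dser E S"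
proof (cases S)
  case None then show ?thesis by (simp add: dser_def)
next
  case (Some t)
  have "deg (Some (allX t)) = deg (Some t)" by (rule deg_allX)
  then show ?thesis using Some by (simp add: dser_def)
qed

lemma Dl_scale:
  fixes E :: "('a::comm_ring_1) pser"
  assumes f: "fin E"
  shows "Dl (\<lambda>S. c ^ deg S * E S) T = c ^ (deg T + 1) * Dl E T"
proof -
  let ?A = "{S. dser E S \<noteq> 0 \<and> degx S \<le> degx T}"
  have fA: "finite ?A" using fin_le[OF dser_fin[OF f]] .
  have sub: "{S. dser (\<lambda>S. c ^ deg S * E S) S \<noteq> 0 \<and> degx S \<le> degx T} \<subseteq> ?A"
  proof
    fix S assume a: "S \<in> {S. dser (\<lambda>S. c ^ deg S * E S) S \<noteq> 0 \<and> degx S \<le> degx T}"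
    have "dser (\<lambda>S. c ^ deg S * E S) S = c ^ deg S * dser E S" by (rule dser_scale)
    then have "c ^ deg S * dser E S \<noteq> 0" "degx S \<le> degx T" using a by auto
    then show "S \<in> ?A" by auto
  qed
  have "Dl (\<lambda>S. c ^ deg S * E S) T = (\<Sum>S\<in>?A. dser (\<lambda>S. c ^ deg S * E S) S * phiO xser oneser S T)"
    unfolding Dl_def by (rule phi_eq_sum[OF ord1_xser fA sub])
  also have "\<dots> = (\<Sum>S\<in>?A. c ^ (deg T + 1) * (dser E S * phiO xser oneser S T))"
  proof (rule sum.cong[OF refl])
    fix S assume "S \<in> ?A"
    then have nz1: "dser E S \<noteq> 0" by simp
    show "dser (\<lambda>S. c ^ deg S * E S) S * phiO xser oneser S T = c ^ (deg T + 1) * (dser E S * phiO xser oneser S T)"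
    proof (cases "phiO xser oneser S T = (0::'a)")
      case True
      then show ?thesis by simp
    next
      case False
      have "degyO S = 1" using dser_supp[OF nz1] .
      then have "deg T + 1 = deg S" using phiO_x1_deg[OF False] by simp
      then show ?thesis by (simp only: dser_scale mult.assoc)
    qed
  qed
  also have "\<dots> = c ^ (deg T + 1) * (\<Sum>S\<in>?A. dser E S * phiO xser oneser S T)"
    by (simp only: sum_distrib_left)
  also have "(\<Sum>S\<in>?A. dser E S * phiO xser oneser S T) = Dl E T"
    unfolding Dl_def by (rule phi_eq_sum[OF ord1_xser fA, symmetric]) simp
  finally show ?thesis .
qed

lemma fin_Eser: "fin (Eser k :: ('a::field_char_0) pser)" by (rule suppx_fin[OF suppx_Eser])

lemma deg_ge1: "okx (Some t) \<Longrightarrow> 1 \<le> degT t"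
  using wf_degT by (auto simp: okx_def)

lemma Dl_Eser_None:
  "Dl (Eser k :: ('a::field_char_0) pser) None = 1"
proof -
  let ?E = "Eser k :: 'a pser"
  have "Dl ?E None = (\<Sum>S\<in>{Some (Lf Y)}. dser ?E S * phiO xser oneser S None)"
    unfolding Dl_def
  proof (rule phi_eq_sum[OF ord1_xser])
    show "{S. dser ?E S \<noteq> 0 \<and> degx S \<le> degx None} \<subseteq> {Some (Lf Y)}"
    proof
      fix S assume S: "S \<in> {S. dser ?E S \<noteq> 0 \<and> degx S \<le> degx None}"
      then obtain t where t: "S = Some t" "degyT t = 1" "Ef k (allX t) \<noteq> (0::'a)" "degxT t = 0"
        by (cases S) (auto simp: dser_def Eser_def degx_def split: if_splits)
      have "wfT t" using Ef_supp[OF t(3)] allX_props[of t] by simp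
      moreover have "degT t = 1" using t degT_split[of t] by simp
      ultimately have "t = Lf Y"
      proof (cases t)
        case (Lf l) then show ?thesis using t(2) by (cases l) auto
      next
        case (Nd ts) then show ?thesis using \<open>wfT t\<close> \<open>degT t = 1\<close> wf_Nd_deg2[of ts] by simp
      qed
      then show "S \<in> {Some (Lf Y)}" using t by simp
    qed
  qed simp
  also have "\<dots> = 1" by (simp add: dser_def Eser_def phiO_def oneser_def)
  finally show ?thesis .
qed


lemma fl_rep_upd: "j < k \<Longrightarrow> fl ((replicate k None)[j := Some t]) = [t]"
proof (induction k arbitrary: j)
  case 0 then show ?case by simp
next
  case (Suc k)
  have fr: "fl (replicate m None) = []" for m by (induction m) auto
  show ?case
  proof (cases j)
    case 0 then show ?thesis using fr by simp
  next
    case (Suc j') then show ?thesis using Suc.IH[of j'] Suc.prems by simp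
  qed
qed

lemma Dl_Eser:
  assumes k: "2 \<le> k"
  shows "Dl (Eser k :: ('a::field_char_0) pser) = Eser k"
proof -
  let ?E = "Eser k :: 'a pser"
  let ?G = "Dl ?E"
  let ?D = "\<lambda>S. ?G S - ?E S"
  let ?r = "replicate k ?E"
  have fE: "fin ?E" and sE: "suppx ?E" by (rule fin_Eser, rule suppx_Eser)
  have fG: "fin ?G" unfolding Dl_def by (rule phi_fin[OF ord1_xser fin_oneser dser_fin[OF fE]])
  have sG: "suppx ?G" unfolding Dl_def by (rule suppx_phi[OF suppx_xser suppx_oneser])
  have PR: "prods ?r = (\<lambda>S. of_nat k ^ deg S * ?E S)"
  proof (rule ext)
    fix S show "prods ?r S = of_nat k ^ deg S * ?E S"
      using prods_rep_Eser[OF k, of S] by (simp add: of_nat_power)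
  qed
  have rs: "\<forall>f\<in>set ?r. fin f \<and> suppx f" using fE sE by simp
  have A: "of_nat k ^ (deg T + 1) * ?G T = (\<Sum>j<k. prods (?r[j := ?G]) T)" for T
  proof -
    have "of_nat k ^ (deg T + 1) * ?G T = Dl (\<lambda>S. of_nat k ^ deg S * ?E S) T"
      by (rule Dl_scale[OF fE, symmetric])
    also have "\<dots> = Dl (prods ?r) T" using PR by simp
    also have "\<dots> = (\<Sum>j<length ?r. prods (?r[j := Dl (?r!j)]) T)" by (rule Dl_prods[OF rs])
    also have "\<dots> = (\<Sum>j<k. prods (?r[j := ?G]) T)" by (intro sum.cong) auto
    finally show ?thesis .
  qed
  have B: "(\<Sum>j<k. prods (?r[j := ?E]) T) = of_nat k ^ (deg T + 1) * ?E T" for T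
  proof -
    have "?r[j := ?E] = ?r" for j by (cases "j < k") (simp_all add: list_update_same_conv list_update_beyond)
    then have "(\<Sum>j<k. prods (?r[j := ?E]) T) = of_nat k * prods ?r T" by simp
    then show ?thesis using PR by (simp add: algebra_simps)
  qed
  have C: "of_nat k ^ (deg T + 1) * ?D T = (\<Sum>j<k. prods (?r[j := ?D]) T)" for T
  proof -
    have "(\<Sum>j<k. prods (?r[j := ?D]) T) = (\<Sum>j<k. prods (?r[j := ?G]) T - prods (?r[j := ?E]) T)"
      by (intro sum.cong refl prods_slot_diff) simp
    also have "\<dots> = of_nat k ^ (deg T + 1) * ?G T - of_nat k ^ (deg T + 1) * ?E T"
      using A[of T] B[of T] by (simp add: sum_subtractf)
    finally show ?thesis by (simp add: algebra_simps)
  qed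
  have D0: "?D None = 0" using Dl_Eser_None[of k] by (simp add: Eser_def)
  have sD: "?D S \<noteq> 0 \<Longrightarrow> okx S" for S
  proof -
    assume a: "?D S \<noteq> 0"
    show "okx S"
    proof (cases "?G S = 0")
      case True then have "?E S \<noteq> 0" using a by simp
      then show ?thesis using sE by (simp add: suppx_def)
    next
      case False then show ?thesis using sG by (simp add: suppx_def)
    qed
  qed
  have E0: "S = None" if e0: "?E S \<noteq> 0" "deg S = 0" for S
  proof (cases S)
    case (Some t)
    then have "okx (Some t)" using sE e0 by (simp add: suppx_def)
    then have "1 \<le> degT t" by (rule deg_ge1)
    then show ?thesis using e0 Some by (simp add: deg_def)
  qed simp
  have "?D T = 0" for T
  proof (rule ccontr)
    assume "?D T \<noteq> 0"
    then obtain T0 where T0: "?D T0 \<noteq> 0" and min: "\<forall>S. ?D S \<noteq> 0 \<longrightarrow> deg T0 \<le> deg S"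
      using ex_has_least_nat[of "\<lambda>S. ?D S \<noteq> 0" T deg] by blast
    have "T0 \<noteq> None" using T0 D0 by (cases T0) auto
    then obtain t0 where t0: "T0 = Some t0" by auto
    have "okx T0" using sD T0 by simp
    then have n1: "1 \<le> deg T0" using t0 deg_ge1 by (simp add: deg_def)
    let ?n = "deg T0"
    have single: "prods (?r[j := ?D]) T0 = ?D T0" if j: "j < k" for j
    proof -
      define ss0 where "ss0 = (replicate k None)[j := T0]"
      let ?P = "\<lambda>ss. \<Prod>i<length (?r[j := ?D]). ((?r[j := ?D]) ! i) (ss ! i)"
      have ss0f: "ss0 \<in> fib k T0"
        using fl_rep_upd[OF j, of t0] fl_single t0 by (simp add: fib_def ss0_def)
      have Pform: "?P ss = ?D (ss!j) * (\<Prod>i\<in>{..<k} - {j}. ?E (ss!i))" for ss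
        using tup_upd[of j ?r ?D ss] j by simp
      have P0: "?P ss0 = ?D T0"
      proof -
        have "(\<Prod>i\<in>{..<k} - {j}. ?E (ss0!i)) = 1"
          by (intro prod.neutral) (auto simp: ss0_def Eser_def)
        then show ?thesis using Pform[of ss0] j by (simp add: ss0_def)
      qed
      have Pz: "?P ss = 0" if ss: "ss \<in> fib k T0 - {ss0}" for ss
      proof (rule ccontr)
        assume nz: "?P ss \<noteq> 0"
        have l: "length ss = k" and b: "bul ss = T0" using ss by (auto simp: fib_def)
        have Dj: "?D (ss!j) \<noteq> 0" using nz Pform[of ss] by auto
        have Ei: "?E (ss!i) \<noteq> 0" if "i < k" "i \<noteq> j" for i
        proof
          assume "?E (ss!i) = 0"
          then have z: "(\<Prod>i\<in>{..<k} - {j}. ?E (ss!i)) = 0" using that by (intro prod_zero) auto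
          have "?P ss = 0" by (simp only: Pform[of ss] z mult_zero_right)
          then show False by (rule notE[OF nz])
        qed
        have dj: "?n \<le> deg (ss!j)" using min Dj by blast
        have "sum_list (map deg ss) = ?n" using b deg_bul[of ss] by simp
        then have "(\<Sum>i<k. deg (ss!i)) = ?n" using l by (simp add: sum_list_map_nth)
        moreover have "(\<Sum>i<k. deg (ss!i)) = deg (ss!j) + (\<Sum>i\<in>{..<k} - {j}. deg (ss!i))"
          using j by (intro sum.remove) auto
        ultimately have "(\<Sum>i\<in>{..<k} - {j}. deg (ss!i)) = 0" using dj by linarith
        then have di: "\<forall>i\<in>{..<k} - {j}. deg (ss!i) = 0" by simp
        have "ss = ss0"
        proof (rule nth_equalityI)
          show "length ss = length ss0" using l by (simp add: ss0_def)
          fix i assume i: "i < length ss"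
          show "ss!i = ss0!i"
          proof (cases "i = j")
            case False
            then have "ss!i = None" using E0 Ei di i l by auto
            then show ?thesis using False i l by (simp add: ss0_def)
          next
            case True
            have "\<forall>i<length ss. i \<noteq> j \<longrightarrow> ss!i = None" using E0 Ei di l by auto
            have "ss!j \<noteq> None" using Dj D0 by (cases "ss!j") auto
            then obtain u where u: "ss!j = Some u" by auto
            have "ss = (replicate k None)[j := Some u]"
            proof (rule nth_equalityI)
              show "length ss = length ((replicate k None)[j := Some u])" using l by simp
              fix m assume "m < length ss"
              then show "ss!m = (replicate k None)[j := Some u] ! m"
                using \<open>\<forall>i<length ss. i \<noteq> j \<longrightarrow> ss!i = None\<close> u l by (cases "m = j") auto
            qed
            then have "fl ss = [u]" using fl_rep_upd[OF j] by simp
            then have "bul ss = Some u" by (rule fl_single)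
            then have "ss!j = T0" using b u by simp
            then show ?thesis using True i l by (simp add: ss0_def)
          qed
        qed
        then show False using ss by simp
      qed
      have "prods (?r[j := ?D]) T0 = (\<Sum>ss\<in>fib k T0. ?P ss)" unfolding prods_i by simp
      also have "\<dots> = ?P ss0 + (\<Sum>ss\<in>fib k T0 - {ss0}. ?P ss)"
        using ss0f by (intro sum.remove[OF fin_fib])
      also have "(\<Sum>ss\<in>fib k T0 - {ss0}. ?P ss) = 0" using Pz by (intro sum.neutral) blast
      finally show ?thesis using P0 by simp
    qed
    have "of_nat k ^ (?n + 1) * ?D T0 = of_nat k * ?D T0" using C[of T0] single by simp
    then have "(of_nat k ^ (?n + 1) - of_nat k) * ?D T0 = 0" by (simp add: algebra_simps)
    moreover have "(of_nat k ^ (?n + 1) - of_nat k :: 'a) \<noteq> 0"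
    proof -
      have "k < k ^ (?n + 1)" using pow_gt_k[OF k, of "?n + 1"] n1 by simp
      then have "(of_nat (k ^ (?n + 1)) :: 'a) \<noteq> of_nat k" by (metis less_irrefl of_nat_eq_iff)
      then show ?thesis by (simp add: of_nat_power)
    qed
    ultimately show False using T0 by simp
  qed
  then show ?thesis by (intro ext) simp
qed


section \<open>The logarithm\<close>

primrec Lv :: "('a::comm_ring_1) pser \<Rightarrow> nat \<Rightarrow> 'a pser" where
  "Lv g 0 = (\<lambda>_. 0)"
| "Lv g (Suc n) = (\<lambda>T. if T \<noteq> None \<and> okx T \<and> deg T \<le> Suc n then
      xser T - (\<Sum>S\<in>{S. S \<noteq> None \<and> okx S \<and> deg S < deg T}. Lv g n S * phiO g (\<lambda>_. 0) S T) else 0)"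

definition Wset :: "ptree option \<Rightarrow> ptree option set" where
  "Wset T = {S. S \<noteq> None \<and> okx S \<and> deg S < deg T}"

lemma okx_deg: "okx S \<Longrightarrow> S \<noteq> None \<Longrightarrow> 1 \<le> deg S"
  using deg_ge1 by (cases S) (auto simp: deg_def)

lemma okx_degx: "okx S \<Longrightarrow> degx S = deg S"
  using okx_degT by (cases S) (auto simp: degx_def deg_def)

lemma Lv_stable: "deg S \<le> m \<Longrightarrow> Lv g m S = Lv g (Suc m) S"
proof (induction m arbitrary: S)
  case 0
  then have "\<not> (S \<noteq> None \<and> okx S)" using okx_deg by fastforce
  then show ?case
  proof (cases S)
    case (Some t)
    then have "\<not> okx S" using \<open>\<not> (S \<noteq> None \<and> okx S)\<close> by simp
    then show ?thesis by simp
  qed simp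
next
  case (Suc m)
  have "(\<Sum>S'\<in>Wset S. Lv g m S' * phiO g (\<lambda>_. 0) S' S) = (\<Sum>S'\<in>Wset S. Lv g (Suc m) S' * phiO g (\<lambda>_. 0) S' S)"
  proof (rule sum.cong[OF refl])
    fix S' assume "S' \<in> Wset S"
    then have "deg S' \<le> m" using Suc.prems by (simp add: Wset_def)
    then show "Lv g m S' * phiO g (\<lambda>_. 0) S' S = Lv g (Suc m) S' * phiO g (\<lambda>_. 0) S' S" using Suc.IH by simp
  qed
  note se = this
  have c1: "deg S \<le> Suc m" and c2: "deg S \<le> Suc (Suc m)" using Suc.prems by simp_all
  have e1: "Lv g (Suc m) S = (if S \<noteq> None \<and> okx S \<and> deg S \<le> Suc m then
      xser S - (\<Sum>S'\<in>Wset S. Lv g m S' * phiO g (\<lambda>_. 0) S' S) else 0)"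
    by (simp only: Lv.simps Wset_def)
  have e2: "Lv g (Suc (Suc m)) S = (if S \<noteq> None \<and> okx S \<and> deg S \<le> Suc (Suc m) then
      xser S - (\<Sum>S'\<in>Wset S. Lv g (Suc m) S' * phiO g (\<lambda>_. 0) S' S) else 0)"
    by (simp only: Lv.simps Wset_def)
  show ?case by (simp only: e1 e2 se c1 c2 simp_thms)
qed

lemma Lv_stable2: "deg S \<le> m \<Longrightarrow> Lv g m S = Lv g (m + d) S"
proof (induction d)
  case 0 then show ?case by simp
next
  case (Suc d) then show ?case using Lv_stable[of S "m + d" g] by simp
qed

definition Lg :: "('a::comm_ring_1) pser \<Rightarrow> 'a pser" where
  "Lg g T = Lv g (Suc (deg T)) T"

lemma Lg_rec: "Lg g T = (if T \<noteq> None \<and> okx T then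
   xser T - (\<Sum>S\<in>Wset T. Lg g S * phiO g (\<lambda>_. 0) S T) else 0)"
proof -
  have "(\<Sum>S\<in>Wset T. Lv g (deg T) S * phiO g (\<lambda>_. 0) S T) = (\<Sum>S\<in>Wset T. Lg g S * phiO g (\<lambda>_. 0) S T)"
  proof (rule sum.cong[OF refl])
    fix S assume "S \<in> Wset T"
    then have d: "Suc (deg S) \<le> deg T" by (simp add: Wset_def)
    have "Lg g S = Lv g (Suc (deg S) + (deg T - Suc (deg S))) S"
      unfolding Lg_def by (rule Lv_stable2) simp
    also have "\<dots> = Lv g (deg T) S" using d by simp
    finally show "Lv g (deg T) S * phiO g (\<lambda>_. 0) S T = Lg g S * phiO g (\<lambda>_. 0) S T" by simp
  qed
  note se = this
  have "Lg g T = Lv g (Suc (deg T)) T" by (simp only: Lg_def)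
  also have "\<dots> = (if T \<noteq> None \<and> okx T \<and> deg T \<le> Suc (deg T) then
      xser T - (\<Sum>S\<in>Wset T. Lv g (deg T) S * phiO g (\<lambda>_. 0) S T) else 0)"
    by (simp only: Lv.simps Wset_def)
  also have "\<dots> = (if T \<noteq> None \<and> okx T then
      xser T - (\<Sum>S\<in>Wset T. Lg g S * phiO g (\<lambda>_. 0) S T) else 0)"
    by (simp only: se le_Suc_eq order.refl simp_thms)
  finally show ?thesis .
qed

lemma fin_Wset: "finite (Wset T)"
proof -
  have "Wset T \<subseteq> Some ` (\<Union>j<deg T. {t. wfT t \<and> degT t = j})"
  proof
    fix S assume "S \<in> Wset T"
    then obtain t where "S = Some t" "wfT t" "degT t < deg T" by (cases S) (auto simp: Wset_def okx_def deg_def)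
    then show "S \<in> Some ` (\<Union>j<deg T. {t. wfT t \<and> degT t = j})" by auto
  qed
  then show ?thesis by (rule finite_subset) (auto intro: finite_wf)
qed

lemma suppx_Lg: "suppx (Lg g)"
  unfolding suppx_def by (subst Lg_rec) (auto split: if_splits)

lemma Lg_None: "Lg g None = 0"
  by (subst Lg_rec) simp

lemma suppx_zero: "suppx (\<lambda>_. 0)" by (simp add: suppx_def)

lemma subst_Lg:
  assumes g: "gcond g" and sg: "suppx g"
  shows "phi g (\<lambda>_. 0) (Lg g) = xser"
proof (rule ext)
  fix T
  have og: "ord1 g" using g by (simp add: gcond_def)
  let ?L = "Lg g" and ?z = "\<lambda>_::ptree option. 0"
  show "phi g ?z ?L T = xser T"
  proof (cases "T \<noteq> None \<and> okx T")
    case False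
    show ?thesis
    proof (cases "T = None")
      case True
      have em: "{S. ?L S \<noteq> 0 \<and> degx S \<le> degx T} = {}"
      proof -
        have "\<not> (?L S \<noteq> 0 \<and> degx S \<le> 0)" for S
        proof
          assume a: "?L S \<noteq> 0 \<and> degx S \<le> 0"
          then have "okx S" using suppx_Lg[of g] by (simp add: suppx_def)
          moreover have "S \<noteq> None" using a Lg_None[of g] by (cases S) auto
          ultimately have "1 \<le> degx S" using okx_deg okx_degx by simp
          then show False using a by simp
        qed
        then show ?thesis using True by (auto simp: degx_def)
      qed
      have "phi g ?z ?L T = 0" unfolding phi_def em by simp
      then show ?thesis using True by (simp add: xser_def)
    next
      case nN: False
      then have nok: "\<not> okx T" using False by simp
      have "phiO g ?z S T = 0" for S
        using suppx_phiO[OF sg suppx_zero, of S] nok by (auto simp: suppx_def)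
      moreover have "xser T = 0" using nok by (auto simp: xser_def okx_def)
      ultimately show ?thesis by (simp add: phi_def)
    qed
  next
    case True
    let ?A = "{S. S \<noteq> None \<and> okx S \<and> deg S \<le> deg T}"
    have fA: "finite ?A"
    proof -
      have "?A \<subseteq> Wset (Some (Lf X)) \<union> Wset T \<union> {S. S \<noteq> None \<and> okx S \<and> deg S = deg T}" by (auto simp: Wset_def)
      moreover have "finite {S. S \<noteq> None \<and> okx S \<and> deg S = deg T}"
        by (rule finite_subset[of _ "Some ` {t. wfT t \<and> degT t = deg T}"]) (auto simp: okx_def deg_def intro: finite_wf)
      ultimately show ?thesis using fin_Wset finite_subset by (metis (no_types, lifting) finite_UnI)
    qed
    have "phi g ?z ?L T = (\<Sum>S\<in>?A. ?L S * phiO g ?z S T)"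
    proof (rule phi_eq_sum[OF og fA])
      show "{S. ?L S \<noteq> 0 \<and> degx S \<le> degx T} \<subseteq> ?A"
      proof
        fix S assume a: "S \<in> {S. ?L S \<noteq> 0 \<and> degx S \<le> degx T}"
        then have "okx S" using suppx_Lg[of g] by (simp add: suppx_def)
        moreover have "S \<noteq> None" using a Lg_None[of g] by (cases S) auto
        moreover have "deg S \<le> deg T" using a \<open>okx S\<close> True okx_degx[of S] okx_degx[of T] by simp
        ultimately show "S \<in> ?A" by simp
      qed
    qed
    also have "\<dots> = (\<Sum>S\<in>insert T (Wset T). ?L S * phiO g ?z S T)"
    proof (rule sum.mono_neutral_right[OF fA])
      show "insert T (Wset T) \<subseteq> ?A" using True by (auto simp: Wset_def)
      show "\<forall>S\<in>?A - insert T (Wset T). ?L S * phiO g ?z S T = 0"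
      proof
        fix S assume S: "S \<in> ?A - insert T (Wset T)"
        then have "degx T \<le> degx S" "okx S" "S \<noteq> T" using True okx_degx by (auto simp: Wset_def)
        then have "phiO g ?z S T = 0" using phiO_tri[OF g] by simp
        then show "?L S * phiO g ?z S T = 0" by simp
      qed
    qed
    also have "\<dots> = ?L T * phiO g ?z T T + (\<Sum>S\<in>Wset T. ?L S * phiO g ?z S T)"
      by (rule sum.insert[OF fin_Wset]) (simp add: Wset_def)
    also have "phiO g ?z T T = 1" using phiO_tri[OF g] True by simp
    also have "?L T = xser T - (\<Sum>S\<in>Wset T. ?L S * phiO g ?z S T)" using True by (subst Lg_rec) simp
    finally show ?thesis by simp
  qed
qed


definition gE :: "nat \<Rightarrow> ('a::field_char_0) pser" where
  "gE k = (\<lambda>S. Eser k S - oneser S)"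

lemma gE_val: "gE k S = (case S of None \<Rightarrow> 0 | Some t \<Rightarrow> Ef k t)"
  by (cases S) (simp_all add: gE_def Eser_def oneser_def)

lemma suppx_gE: "suppx (gE k :: ('a::field_char_0) pser)"
  unfolding suppx_def
proof (intro allI impI)
  fix S assume "gE k S \<noteq> (0::'a)"
  then show "okx S"
  proof (cases S)
    case (Some t)
    then have "Ef k t \<noteq> (0::'a)" using \<open>gE k S \<noteq> (0::'a)\<close> by (simp add: gE_val)
    then show ?thesis using Ef_supp[where 'a='a] Some by (simp add: okx_def)
  qed (simp add: okx_def)
qed

lemma gcond_gE: "gcond (gE k :: ('a::field_char_0) pser)"
proof -
  let ?g = "gE k :: 'a pser"
  have fg: "fin ?g" by (rule suppx_fin[OF suppx_gE])
  have ok: "?g S \<noteq> 0 \<Longrightarrow> okx S \<and> S \<noteq> None" for S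
    using suppx_gE[of k, where 'a='a] by (cases S) (auto simp: suppx_def gE_val)
  have "ord1 ?g"
    unfolding ord1_def using fg ok okx_deg okx_degx by fastforce
  moreover have "?g (Some (Lf X)) = 1" by (simp add: gE_val)
  moreover have "?g S = 0 \<or> S = Some (Lf X) \<or> 2 \<le> degx S" for S
  proof (cases "?g S = 0")
    case False
    then have o: "okx S" "S \<noteq> None" using ok by auto
    then obtain t where t: "S = Some t" "wfT t" "degyT t = 0" by (cases S) (auto simp: okx_def)
    show ?thesis
    proof (cases t)
      case (Lf l) then show ?thesis using t by (cases l) auto
    next
      case (Nd ts)
      then have "2 \<le> degT t" using t wf_Nd_deg2 by simp
      then show ?thesis using t okx_degx[of S] o by (simp add: deg_def)
    qed
  qed simp
  ultimately show ?thesis by (auto simp: gcond_def)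
qed

lemma serx_props: "h \<in> serx \<Longrightarrow> suppx h \<and> fin h"
  by (auto simp: serx_def serxy_def suppx_def fin_def okx_def split: option.splits)

lemma suppx_add: fixes f g :: "('a::comm_ring_1) pser" shows "suppx f \<Longrightarrow> suppx g \<Longrightarrow> suppx (\<lambda>S. f S + g S)"
  unfolding suppx_def by (metis add.left_neutral)

lemma suppx_diff: fixes f g :: "('a::comm_ring_1) pser" shows "suppx f \<Longrightarrow> suppx g \<Longrightarrow> suppx (\<lambda>S. f S - g S)"
  unfolding suppx_def by (metis diff_self)

lemma Logk_eq:
  assumes k: "2 \<le> k"
  shows "Logk k = Lg (gE k :: ('a::field_char_0) pser)"
proof -
  let ?g = "gE k :: 'a pser"
  have ge: "(\<lambda>S. Expk k S - oneser S) = ?g" using Expk_eq[OF k, where 'a='a] by (simp add: gE_def)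
  have gc: "gcond ?g" by (rule gcond_gE)
  have og: "ord1 ?g" using gc by (simp add: gcond_def)
  have sg: "suppx ?g" by (rule suppx_gE)
  let ?P = "\<lambda>h. h \<in> serx \<and> h None = 0 \<and> subst h ?g = xser"
  have P1: "Lg ?g \<in> serx" by (rule suppx_serx[OF suppx_Lg])
  have P2: "Lg ?g None = 0" by (rule Lg_None)
  have P: "?P (Lg ?g)"
    using P1 P2 subst_Lg[OF gc sg] by (simp add: subst_def)
  have U: "h = Lg ?g" if h: "?P h" for h
  proof -
    have sh: "suppx h" and fh: "fin h" using serx_props h by auto
    have fL: "fin (Lg ?g)" by (rule suppx_fin[OF suppx_Lg])
    have sf: "suppx (\<lambda>S. h S - Lg ?g S)" by (rule suppx_diff[OF sh suppx_Lg])
    have "phi ?g (\<lambda>_. 0) (\<lambda>S. h S - Lg ?g S) T = 0" for T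
      using phi_diff[OF og fh fL, of "\<lambda>_. 0" T] h subst_Lg[OF gc sg] by (simp add: subst_def)
    then have "h S - Lg ?g S = 0" for S
      using phi_inj[OF gc fin_diff[OF fh fL] sf] by blast
    then show ?thesis by (intro ext) simp
  qed
  have "Logk k = (THE h. ?P h)" unfolding Logk_def ge by simp
  also have "\<dots> = Lg ?g" by (rule the_equality[of ?P, OF P U])
  finally show ?thesis .
qed

lemma dser_xser: "dser xser = yser"
proof (rule ext)
  fix S
  show "dser xser S = yser S"
  proof (cases S)
    case None then show ?thesis by (simp add: dser_def yser_def)
  next
    case (Some t)
    have "(degyT t = 1 \<and> allX t = Lf X) = (t = Lf Y)"
    proof
      assume a: "degyT t = 1 \<and> allX t = Lf X"
      then obtain l where "t = Lf l" by (cases t) auto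
      then show "t = Lf Y" using a by (cases l) auto
    qed simp
    then show ?thesis using Some by (auto simp: dser_def yser_def xser_def)
  qed
qed

lemma dser_oneser: "dser oneser = (\<lambda>_. 0)"
  by (rule ext) (simp add: dser_def oneser_def split: option.splits)

theorem proposition7p2:
  fixes k :: nat
  assumes "k \<ge> 2"
  shows "hder (\<lambda>S. oneser S + xser S) (Logk k :: ('a::field_char_0) pser) = oneser"
proof -
  have k: "2 \<le> k" using assms by simp
  let ?g = "gE k :: 'a pser"
  let ?L = "Lg ?g"
  let ?z = "\<lambda>_::ptree option. 0::'a"
  let ?ox = "\<lambda>S. oneser S + xser S :: 'a"
  let ?og = "\<lambda>S. oneser S + ?g S"
  let ?F = "phi xser ?ox (dser ?L)"
  have gc: "gcond ?g" by (rule gcond_gE)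
  have og: "ord1 ?g" using gc by (simp add: gcond_def)
  have sg: "suppx ?g" by (rule suppx_gE)
  have fg: "fin ?g" by (rule suppx_fin[OF sg])
  have Yg: "Yfree ?g" by (rule suppx_Yfree[OF sg])
  have fL: "fin ?L" by (rule suppx_fin[OF suppx_Lg])
  have YL: "Yfree ?L" by (rule suppx_Yfree[OF suppx_Lg])
  have fdL: "fin (dser ?L)" by (rule dser_fin[OF fL])
  have fox: "fin ?ox" by (rule fin_add[OF fin_oneser fin_xser])
  have fz: "fin ?z" by (simp add: fin_def)
  have hF: "hder ?ox (Logk k) = ?F" using Logk_eq[OF k, where 'a='a] by (simp add: hder_def)
  have step1: "phi ?g ?z ?F = phi ?g ?og (dser ?L)"
  proof -
    have "phi ?g ?z ?F = phi (phi ?g ?z xser) (phi ?g ?z ?ox) (dser ?L)"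
      by (rule phi_comp[OF og fz ord1_xser fox fdL])
    moreover have "phi ?g ?z xser = ?g" by (rule phi_xser[OF og])
    moreover have "phi ?g ?z ?ox = ?og"
    proof (rule ext)
      fix T show "phi ?g ?z ?ox T = ?og T"
        using phi_add[OF og fin_oneser fin_xser, of ?z T] phi_oneser[OF og, of ?z] phi_xser[OF og, of ?z] by simp
    qed
    ultimately show ?thesis by simp
  qed
  have step2: "phi ?g ?og (dser ?L) = oneser"
  proof -
    have sL: "phi ?g ?z ?L = xser" by (rule subst_Lg[OF gc sg])
    have ch: "dser xser = phi ?g (dser ?g) (dser ?L)"
      using chain[OF fL YL og Yg] sL by simp
    have "phi xser oneser (phi ?g (dser ?g) (dser ?L)) =
          phi (phi xser oneser ?g) (phi xser oneser (dser ?g)) (dser ?L)"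
      by (rule phi_comp[OF ord1_xser fin_oneser og dser_fin[OF fg] fdL])
    moreover have "phi xser oneser ?g = ?g" by (rule phi_xser_id[OF fg sg])
    moreover have "phi xser oneser (dser ?g) = ?og"
    proof -
      have "dser ?g = dser (Eser k :: 'a pser)"
        unfolding gE_def dser_diff dser_oneser by simp
      then have "phi xser oneser (dser ?g) = Dl (Eser k :: 'a pser)" by (simp add: Dl_def)
      also have "\<dots> = Eser k" by (rule Dl_Eser[OF k])
      also have "\<dots> = ?og" by (rule ext) (simp add: gE_def)
      finally show ?thesis .
    qed
    moreover have "phi xser oneser (dser xser) = (oneser :: 'a pser)"
      unfolding dser_xser by (rule phi_yser[OF ord1_xser])
    ultimately show ?thesis using ch by simp
  qed
  have fF: "fin ?F" by (rule phi_fin[OF ord1_xser fox fdL])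
  have sF: "suppx ?F" by (rule suppx_phi[OF suppx_xser suppx_add[OF suppx_oneser suppx_xser]])
  have "phi ?g ?z (\<lambda>S. ?F S - oneser S) T = 0" for T
    using phi_diff[OF og fF fin_oneser, of ?z T] step1 step2 phi_oneser[OF og, of ?z] by simp
  then have "?F S - oneser S = 0" for S
    using phi_inj[OF gc fin_diff[OF fF fin_oneser] suppx_diff[OF sF suppx_oneser]] by blast
  then have "?F = oneser" by (intro ext) simp
  then show ?thesis using hF by simp
qed

end
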